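(* Let $G$ be a compact group. (i) $\mathrm{ZM}(G)$ is weak* closed in $\mathrm{M}(G)$, and $\mathrm{ZL}^1(G)$ is weak* dense in $\mathrm{ZM}(G)$. (ii) Let $\tilde m:\mathrm{M}(G\times G)\to\mathrm{M}(G)$ be defined by $\int_G u\,d\tilde m(\mu)=\int_{G\times G}u(st)\,d\mu(s,t)$ for $u\in C(G)$. Then $\tilde m(\mathrm{ZM}(G\times G))=\mathrm{ZM}(G)$ and $\tilde m:\mathrm{ZM}(G\times G)\to\mathrm{ZM}(G)$ is a homomorphism.
   Context: $\mathrm{M}(G)$ is the measure algebra of $G$ with convolution, identified with the dual of $C(G)$ (this gives the weak* topology); $\mathrm{ZM}(G)$ is its centre. $\mathrm{L}^1(G)$ (normalised Haar measure) is regarded as the subalgebra of absolutely continuous measures, and $\mathrm{ZL}^1(G)$ is its centre. *)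

theory Defs
  imports "HOL-Probability.Probability" "HOL-Algebra.Group"
begin

definition compact_group :: "('a, 'b) monoid_scheme \<Rightarrow> 'a topology \<Rightarrow> bool" where
  "compact_group G T \<longleftrightarrow> group G \<and> topspace T = carrier G \<and> compact_space T \<and>
     Hausdorff_space T \<and>
     continuous_map (prod_topology T T) T (\<lambda>p. fst p \<otimes>\<^bsub>G\<^esub> snd p) \<and>
     continuous_map T T (\<lambda>x. inv\<^bsub>G\<^esub> x)"

definition Cfun :: "'a topology \<Rightarrow> ('a \<Rightarrow> complex) set" where
  "Cfun T = {u. continuous_map T euclidean u \<and> (\<forall>x. x \<notin> topspace T \<longrightarrow> u x = 0)}"

definition supnorm :: "'a topology \<Rightarrow> ('a \<Rightarrow> complex) \<Rightarrow> real" where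
  "supnorm T u = Sup ((\<lambda>x. cmod (u x)) ` topspace T)"

text \<open>M(G), identified with the dual of C(G): bounded complex-linear functionals on C(G)
(extended by 0 outside C(G)).  The weak* topology is the topology of pointwise
convergence on C(G), i.e. the (product) topology of the function type restricted to M(G).\<close>
definition Meas :: "'a topology \<Rightarrow> (('a \<Rightarrow> complex) \<Rightarrow> complex) set" where
  "Meas T = {\<phi>.
     (\<forall>u\<in>Cfun T. \<forall>v\<in>Cfun T. \<phi> (\<lambda>x. u x + v x) = \<phi> u + \<phi> v) \<and>
     (\<forall>c. \<forall>u\<in>Cfun T. \<phi> (\<lambda>x. c * u x) = c * \<phi> u) \<and>
     (\<exists>B. \<forall>u\<in>Cfun T. cmod (\<phi> u) \<le> B * supnorm T u) \<and>
     (\<forall>u. u \<notin> Cfun T \<longrightarrow> \<phi> u = 0)}"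

definition conv :: "('a, 'b) monoid_scheme \<Rightarrow> 'a topology \<Rightarrow>
    (('a \<Rightarrow> complex) \<Rightarrow> complex) \<Rightarrow> (('a \<Rightarrow> complex) \<Rightarrow> complex) \<Rightarrow> (('a \<Rightarrow> complex) \<Rightarrow> complex)" where
  "conv G T \<mu> \<nu> = (\<lambda>u. if u \<in> Cfun T then
       \<mu> (\<lambda>s. if s \<in> topspace T then
              \<nu> (\<lambda>t. if t \<in> topspace T then u (s \<otimes>\<^bsub>G\<^esub> t) else 0) else 0)
     else 0)"

definition ZM :: "('a, 'b) monoid_scheme \<Rightarrow> 'a topology \<Rightarrow> (('a \<Rightarrow> complex) \<Rightarrow> complex) set" where
  "ZM G T = {\<mu> \<in> Meas T. \<forall>\<nu>\<in>Meas T. conv G T \<mu> \<nu> = conv G T \<nu> \<mu>}"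

definition borel_of :: "'a topology \<Rightarrow> 'a measure" where
  "borel_of T = sigma (topspace T) {U. openin T U}"

definition haar_measure :: "('a, 'b) monoid_scheme \<Rightarrow> 'a topology \<Rightarrow> 'a measure \<Rightarrow> bool" where
  "haar_measure G T m \<longleftrightarrow>
     space m = topspace T \<and> sets m = sets (borel_of T) \<and> prob_space m \<and>
     (\<forall>x\<in>carrier G. \<forall>A\<in>sets m. emeasure m ((\<lambda>s. x \<otimes>\<^bsub>G\<^esub> s) ` A) = emeasure m A) \<and>
     (\<forall>A\<in>sets m. emeasure m A = (INF U\<in>{U. openin T U \<and> A \<subseteq> U}. emeasure m U)) \<and>
     (\<forall>U. openin T U \<longrightarrow> emeasure m U = (SUP K\<in>{K. compactin T K \<and> K \<subseteq> U}. emeasure m K))"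

text \<open>L^1(G) as the subalgebra of M(G) of measures absolutely continuous w.r.t. the
Haar measure m: the functionals \<open>u \<mapsto> \<integral> u f dm\<close> with f integrable.\<close>
definition L1 :: "'a topology \<Rightarrow> 'a measure \<Rightarrow> (('a \<Rightarrow> complex) \<Rightarrow> complex) set" where
  "L1 T m = {\<phi>. \<exists>f. integrable m f \<and>
       \<phi> = (\<lambda>u. if u \<in> Cfun T then (\<integral>x. u x * f x \<partial>m) else 0)}"

definition ZL1 :: "('a, 'b) monoid_scheme \<Rightarrow> 'a topology \<Rightarrow> 'a measure \<Rightarrow> (('a \<Rightarrow> complex) \<Rightarrow> complex) set" where
  "ZL1 G T m = {\<mu> \<in> L1 T m. \<forall>\<nu>\<in>L1 T m. conv G T \<mu> \<nu> = conv G T \<nu> \<mu>}"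

definition mtilde :: "('a, 'b) monoid_scheme \<Rightarrow> 'a topology \<Rightarrow>
    (('a \<times> 'a \<Rightarrow> complex) \<Rightarrow> complex) \<Rightarrow> (('a \<Rightarrow> complex) \<Rightarrow> complex)" where
  "mtilde G T \<mu> = (\<lambda>u. if u \<in> Cfun T then
      \<mu> (\<lambda>p. if p \<in> topspace (prod_topology T T) then u (fst p \<otimes>\<^bsub>G\<^esub> snd p) else 0)
    else 0)"

end

theory Submission
  imports Defs
begin

lemma cont_epsI:
  assumes "\<And>x e. x \<in> topspace X \<Longrightarrow> e > 0 \<Longrightarrow> \<exists>U. openin X U \<and> x \<in> U \<and> (\<forall>y\<in>U. dist (f y) (f x) < e)"
  shows "continuous_map X (euclidean::'b::metric_space topology) f"
  using assms Met_TC.continuous_map_to_metric[of X f] by (simp add: dist_commute)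

lemma cont_epsD:
  assumes "continuous_map X (euclidean::'b::metric_space topology) f" "x \<in> topspace X" "e > 0"
  shows "\<exists>U. openin X U \<and> x \<in> U \<and> (\<forall>y\<in>U. dist (f y) (f x) < e)"
  using assms Met_TC.continuous_map_to_metric[of X f] by (simp add: dist_commute) (metis dist_commute)

lemma continuous_map_cmult [continuous_intros]:
  fixes f :: "'a \<Rightarrow> 'b::real_normed_algebra"
  shows "\<lbrakk>continuous_map X euclidean f; continuous_map X euclidean g\<rbrakk> \<Longrightarrow> continuous_map X euclidean (\<lambda>x. f x * g x)"
  by (simp add: continuous_map_atin tendsto_mult)

lemma continuous_map_of_real_comp [continuous_intros]:
  "continuous_map X euclideanreal f \<Longrightarrow> continuous_map X euclidean (\<lambda>x. complex_of_real (f x))"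
  by (simp add: continuous_map_atin tendsto_of_real)

lemma continuous_map_Re_comp [continuous_intros]:
  "continuous_map X euclidean f \<Longrightarrow> continuous_map X euclideanreal (\<lambda>x. Re (f x))"
  by (simp add: continuous_map_atin tendsto_Re)

lemma Cfun_cont: "u \<in> Cfun X \<Longrightarrow> continuous_map X euclidean u"
  by (simp add: Cfun_def)

lemma Cfun_out: "u \<in> Cfun X \<Longrightarrow> x \<notin> topspace X \<Longrightarrow> u x = 0"
  by (simp add: Cfun_def)

lemma Cfun_ext0:
  assumes "continuous_map X euclidean f"
  shows "(\<lambda>x. if x \<in> topspace X then f x else 0) \<in> Cfun X"
  unfolding Cfun_def using continuous_map_eq[OF assms, of "\<lambda>x. if x \<in> topspace X then f x else 0"]
  by auto

lemma Cfun_eqI: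
  assumes "u \<in> Cfun X" "v \<in> Cfun X" "\<And>x. x \<in> topspace X \<Longrightarrow> u x = v x"
  shows "u = v"
proof
  fix x show "u x = v x" using assms by (cases "x \<in> topspace X") (auto simp: Cfun_def)
qed

lemma Cfun_ext0_eq: "u \<in> Cfun X \<Longrightarrow> (\<lambda>x. if x \<in> topspace X then u x else 0) = u"
  by (auto simp: Cfun_def)

lemma Cfun_add: "u \<in> Cfun X \<Longrightarrow> v \<in> Cfun X \<Longrightarrow> (\<lambda>x. u x + v x) \<in> Cfun X"
  by (auto simp: Cfun_def intro: continuous_intros)
lemma Cfun_diff: "u \<in> Cfun X \<Longrightarrow> v \<in> Cfun X \<Longrightarrow> (\<lambda>x. u x - v x) \<in> Cfun X"
  by (auto simp: Cfun_def intro: continuous_intros)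
lemma Cfun_mult: "u \<in> Cfun X \<Longrightarrow> v \<in> Cfun X \<Longrightarrow> (\<lambda>x. u x * v x) \<in> Cfun X"
  by (auto simp: Cfun_def intro: continuous_intros)
lemma Cfun_cmult: "u \<in> Cfun X \<Longrightarrow> (\<lambda>x. c * u x) \<in> Cfun X"
  by (auto simp: Cfun_def intro: continuous_intros)
lemma Cfun_multc: "u \<in> Cfun X \<Longrightarrow> (\<lambda>x. u x * c) \<in> Cfun X"
  by (auto simp: Cfun_def intro: continuous_intros)
lemma Cfun_zero: "(\<lambda>x. 0) \<in> Cfun X"
  by (auto simp: Cfun_def)
lemma Cfun_const: "(\<lambda>x. if x \<in> topspace X then c else 0) \<in> Cfun X"
  by (rule Cfun_ext0) simp
lemma Cfun_sum: "finite I \<Longrightarrow> (\<And>i. i \<in> I \<Longrightarrow> u i \<in> Cfun X) \<Longrightarrow> (\<lambda>x. \<Sum>i\<in>I. u i x) \<in> Cfun X"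
  by (induction I rule: finite_induct) (auto simp: Cfun_zero intro: Cfun_add)

lemma Cfun_comp:
  assumes "u \<in> Cfun Y" "continuous_map X Y h"
  shows "(\<lambda>x. if x \<in> topspace X then u (h x) else 0) \<in> Cfun X"
  using assms by (intro Cfun_ext0 continuous_map_compose[of X Y h euclidean u, unfolded o_def]) (auto simp: Cfun_def)

subsection \<open>Sup norm\<close>

lemma Cfun_bounded:
  assumes "compact_space X" "u \<in> Cfun X"
  shows "bdd_above ((\<lambda>x. cmod (u x)) ` topspace X)"
proof -
  have "continuous_map X euclideanreal (\<lambda>x. cmod (u x))"
    using assms by (intro continuous_map_norm Cfun_cont)
  then have "compactin euclideanreal ((\<lambda>x. cmod (u x)) ` topspace X)"
    using assms(1) compact_space_def image_compactin by blast
  then show ?thesis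
    by (simp add: bounded_imp_bdd_above compact_imp_bounded)
qed

lemma supnorm_ge:
  assumes "compact_space X" "u \<in> Cfun X" "x \<in> topspace X"
  shows "cmod (u x) \<le> supnorm X u"
  unfolding supnorm_def using assms Cfun_bounded by (intro cSUP_upper) auto

lemma supnorm_le:
  assumes "topspace X \<noteq> {}" "\<And>x. x \<in> topspace X \<Longrightarrow> cmod (u x) \<le> c"
  shows "supnorm X u \<le> c"
  unfolding supnorm_def using assms by (intro cSUP_least) auto

lemma supnorm_nonneg:
  assumes "compact_space X" "u \<in> Cfun X" "topspace X \<noteq> {}"
  shows "0 \<le> supnorm X u"
  using assms supnorm_ge[OF assms(1,2)] by (meson all_not_in_conv norm_ge_zero order_trans)

subsection \<open>Functionals\<close>

lemma Meas_add: "\<phi> \<in> Meas X \<Longrightarrow> u \<in> Cfun X \<Longrightarrow> v \<in> Cfun X \<Longrightarrow> \<phi> (\<lambda>x. u x + v x) = \<phi> u + \<phi> v"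
  by (simp add: Meas_def)
lemma Meas_cmult: "\<phi> \<in> Meas X \<Longrightarrow> u \<in> Cfun X \<Longrightarrow> \<phi> (\<lambda>x. c * u x) = c * \<phi> u"
  by (simp add: Meas_def)
lemma Meas_out: "\<phi> \<in> Meas X \<Longrightarrow> u \<notin> Cfun X \<Longrightarrow> \<phi> u = 0"
  by (simp add: Meas_def)
lemma Meas_zero: "\<phi> \<in> Meas X \<Longrightarrow> \<phi> (\<lambda>x. 0) = 0"
  using Meas_cmult[OF _ Cfun_zero, of \<phi> X 0] by simp
lemma Meas_multc: "\<phi> \<in> Meas X \<Longrightarrow> u \<in> Cfun X \<Longrightarrow> \<phi> (\<lambda>x. u x * c) = \<phi> u * c"
  using Meas_cmult[of \<phi> X u c] by (simp add: mult.commute)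
lemma Meas_diff: "\<phi> \<in> Meas X \<Longrightarrow> u \<in> Cfun X \<Longrightarrow> v \<in> Cfun X \<Longrightarrow> \<phi> (\<lambda>x. u x - v x) = \<phi> u - \<phi> v"
proof -
  assume a: "\<phi> \<in> Meas X" "u \<in> Cfun X" "v \<in> Cfun X"
  have "\<phi> u = \<phi> (\<lambda>x. (u x - v x) + v x)" by simp
  also have "\<dots> = \<phi> (\<lambda>x. u x - v x) + \<phi> v" by (rule Meas_add[OF a(1) Cfun_diff[OF a(2,3)] a(3)])
  finally show ?thesis by simp
qed
lemma Meas_sum: assumes "\<phi> \<in> Meas X" shows "finite I \<Longrightarrow> (\<And>i. i \<in> I \<Longrightarrow> u i \<in> Cfun X) \<Longrightarrow> \<phi> (\<lambda>x. \<Sum>i\<in>I. u i x) = (\<Sum>i\<in>I. \<phi> (u i))"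
proof (induction I rule: finite_induct)
  case empty then show ?case by (simp add: Meas_zero[OF assms])
next
  case (insert i I)
  have "\<phi> (\<lambda>x. u i x + (\<Sum>i\<in>I. u i x)) = \<phi> (u i) + \<phi> (\<lambda>x. \<Sum>i\<in>I. u i x)"
    using insert by (intro Meas_add[OF assms]) (auto intro: Cfun_sum)
  then show ?case using insert by simp
qed

lemma Meas_bound:
  assumes "\<phi> \<in> Meas X" "compact_space X" "topspace X \<noteq> {}"
  obtains B where "B \<ge> 0" "\<And>u. u \<in> Cfun X \<Longrightarrow> cmod (\<phi> u) \<le> B * supnorm X u"
proof -
  obtain B where B: "\<And>u. u \<in> Cfun X \<Longrightarrow> cmod (\<phi> u) \<le> B * supnorm X u"
    using assms(1) unfolding Meas_def by blast
  show ?thesis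
  proof (rule that[of "max B 0"])
    fix u assume u: "u \<in> Cfun X"
    have "B * supnorm X u \<le> max B 0 * supnorm X u"
      using supnorm_nonneg[OF assms(2) u assms(3)] by (simp add: mult_right_mono)
    then show "cmod (\<phi> u) \<le> max B 0 * supnorm X u" using B[OF u] by linarith
  qed simp
qed

lemma Meas_approx:
  assumes "\<phi> \<in> Meas X" "compact_space X" "topspace X \<noteq> {}"
  obtains B where "B \<ge> 0" "\<And>u v e. u \<in> Cfun X \<Longrightarrow> v \<in> Cfun X \<Longrightarrow> (\<And>x. x \<in> topspace X \<Longrightarrow> cmod (u x - v x) \<le> e)
      \<Longrightarrow> cmod (\<phi> u - \<phi> v) \<le> B * e"
proof -
  obtain B where B: "B \<ge> 0" "\<And>u. u \<in> Cfun X \<Longrightarrow> cmod (\<phi> u) \<le> B * supnorm X u"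
    using Meas_bound[OF assms] by blast
  show ?thesis
  proof (rule that[OF B(1)])
    fix u v e assume uv: "u \<in> Cfun X" "v \<in> Cfun X" and le: "\<And>x. x \<in> topspace X \<Longrightarrow> cmod (u x - v x) \<le> e"
    have "cmod (\<phi> u - \<phi> v) = cmod (\<phi> (\<lambda>x. u x - v x))" using Meas_diff[OF assms(1) uv] by simp
    also have "\<dots> \<le> B * supnorm X (\<lambda>x. u x - v x)" using B(2) Cfun_diff[OF uv] by blast
    also have "\<dots> \<le> B * e" using supnorm_le[OF assms(3) le] B(1) by (simp add: mult_left_mono)
    finally show "cmod (\<phi> u - \<phi> v) \<le> B * e" .
  qed
qed

definition dirac :: "'a topology \<Rightarrow> 'a \<Rightarrow> (('a \<Rightarrow> complex) \<Rightarrow> complex)" where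
  "dirac X a = (\<lambda>u. if u \<in> Cfun X then u a else 0)"

lemma dirac_Meas:
  assumes "compact_space X" "a \<in> topspace X"
  shows "dirac X a \<in> Meas X"
  unfolding Meas_def dirac_def
proof (intro CollectI conjI ballI allI impI)
  show "\<exists>B. \<forall>u\<in>Cfun X. cmod (if u \<in> Cfun X then u a else 0) \<le> B * supnorm X u"
    by (rule exI[of _ 1]) (simp add: supnorm_ge assms)
qed (auto simp: Cfun_add Cfun_cmult)


lemma compact_point_cover:
  assumes "compact_space X" "\<And>x. x \<in> topspace X \<Longrightarrow> openin X (W x) \<and> x \<in> W x"
  obtains D where "finite D" "D \<subseteq> topspace X" "topspace X \<subseteq> (\<Union>x\<in>D. W x)"
proof -
  have "compactin X (topspace X)" using assms(1) by (simp add: compact_space_def)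
  then obtain \<F> where F: "finite \<F>" "\<F> \<subseteq> W ` topspace X" "topspace X \<subseteq> \<Union>\<F>"
    using compactinD[of X "topspace X" "W ` topspace X"] assms(2) by blast
  then obtain D where "D \<subseteq> topspace X" "finite D" "\<F> = W ` D"
    by (meson finite_subset_image)
  then show ?thesis using that F by blast
qed

lemma tube_close:
  fixes F :: "'x \<times> 'y \<Rightarrow> 'c::real_normed_vector"
  assumes "compact_space Y" "continuous_map (prod_topology X Y) euclidean F" "x0 \<in> topspace X" "e > 0"
  obtains U where "openin X U" "x0 \<in> U" "\<And>x y. x \<in> U \<Longrightarrow> y \<in> topspace Y \<Longrightarrow> norm (F (x,y) - F (x0,y)) < e"
proof -
  define H where "H = (\<lambda>p. F p - F (x0, snd p))"
  have c1: "continuous_map (prod_topology X Y) (prod_topology X Y) (\<lambda>p. (x0, snd p))"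
    using assms(3) by (intro continuous_map_pairedI) (auto intro: continuous_map_snd)
  have "continuous_map (prod_topology X Y) euclidean H"
    unfolding H_def using continuous_map_compose[OF c1 assms(2)]
    by (intro continuous_map_diff assms(2)) (simp add: o_def)
  then have op: "openin (prod_topology X Y) {p \<in> topspace (prod_topology X Y). H p \<in> ball 0 e}"
    by (rule openin_continuous_map_preimage) simp
  have sub: "{x0} \<times> topspace Y \<subseteq> {p \<in> topspace (prod_topology X Y). H p \<in> ball 0 e}"
    using assms(3,4) by (auto simp: H_def)
  have "compactin Y (topspace Y)" using assms(1) by (simp add: compact_space_def)
  then obtain U V where UV: "openin X U" "openin Y V" "x0 \<in> U" "topspace Y \<subseteq> V"
      "U \<times> V \<subseteq> {p \<in> topspace (prod_topology X Y). H p \<in> ball 0 e}"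
    using tube_lemma_right[OF op _ assms(3) sub] by blast
  show ?thesis
  proof (rule that[OF UV(1,3)])
    fix x y assume "x \<in> U" "y \<in> topspace Y"
    then have "(x,y) \<in> {p \<in> topspace (prod_topology X Y). H p \<in> ball 0 e}" using UV by blast
    then show "norm (F (x,y) - F (x0,y)) < e" by (simp add: H_def dist_norm norm_minus_commute)
  qed
qed

lemma slice_cont:
  assumes "continuous_map (prod_topology X Y) Z F" "x \<in> topspace X"
  shows "continuous_map Y Z (\<lambda>y. F (x,y))"
proof -
  have "continuous_map Y (prod_topology X Y) (\<lambda>y. (x,y))"
    using assms(2) by (intro continuous_map_pairedI) auto
  then show ?thesis using continuous_map_compose[OF _ assms(1)] by (simp add: o_def)
qed

lemma slice_cont2:
  assumes "continuous_map (prod_topology X Y) Z F" "y \<in> topspace Y"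
  shows "continuous_map X Z (\<lambda>x. F (x,y))"
proof -
  have "continuous_map X (prod_topology X Y) (\<lambda>x. (x,y))"
    using assms(2) by (intro continuous_map_pairedI) auto
  then show ?thesis using continuous_map_compose[OF _ assms(1)] by (simp add: o_def)
qed

lemma slice_Cfun:
  assumes "continuous_map (prod_topology X Y) euclidean F" "x \<in> topspace X"
  shows "(\<lambda>y. if y \<in> topspace Y then F (x,y) else 0) \<in> Cfun Y"
  using Cfun_ext0 slice_cont[OF assms] by blast

lemma slice_Cfun2:
  assumes "continuous_map (prod_topology X Y) euclidean F" "y \<in> topspace Y"
  shows "(\<lambda>x. if x \<in> topspace X then F (x,y) else 0) \<in> Cfun X"
  using Cfun_ext0 slice_cont2[OF assms] by blast

lemma param_cont:
  fixes F :: "'x \<times> 'y \<Rightarrow> complex"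
  assumes Y: "compact_space Y" "topspace Y \<noteq> {}" and F: "continuous_map (prod_topology X Y) euclidean F"
    and \<nu>: "\<nu> \<in> Meas Y"
  shows "(\<lambda>x. if x \<in> topspace X then \<nu> (\<lambda>y. if y \<in> topspace Y then F (x,y) else 0) else 0) \<in> Cfun X"
proof (rule Cfun_ext0, rule cont_epsI)
  obtain B where B: "B \<ge> 0" "\<And>u v e. u \<in> Cfun Y \<Longrightarrow> v \<in> Cfun Y \<Longrightarrow> (\<And>x. x \<in> topspace Y \<Longrightarrow> cmod (u x - v x) \<le> e)
      \<Longrightarrow> cmod (\<nu> u - \<nu> v) \<le> B * e"
    using Meas_approx[OF \<nu> Y] by blast
  fix x0 and e :: real assume x0: "x0 \<in> topspace X" and e: "e > 0" 
  define d where "d = e / (B + 1)"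
  have d: "d > 0" "B * d < e" using B(1) e by (auto simp: d_def field_simps)
  obtain U where U: "openin X U" "x0 \<in> U" "\<And>x y. x \<in> U \<Longrightarrow> y \<in> topspace Y \<Longrightarrow> norm (F (x,y) - F (x0,y)) < d"
    using tube_close[OF Y(1) F x0 d(1)] by blast
  show "\<exists>U. openin X U \<and> x0 \<in> U \<and> (\<forall>y\<in>U. dist (\<nu> (\<lambda>ya. if ya \<in> topspace Y then F (y, ya) else 0)) (\<nu> (\<lambda>y. if y \<in> topspace Y then F (x0, y) else 0)) < e)"
  proof (intro exI conjI ballI)
    fix x assume x: "x \<in> U"
    then have xX: "x \<in> topspace X" using U(1) openin_subset by blast
    have "cmod (\<nu> (\<lambda>ya. if ya \<in> topspace Y then F (x, ya) else 0) - \<nu> (\<lambda>y. if y \<in> topspace Y then F (x0, y) else 0)) \<le> B * d"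
      using U(3)[OF x] by (intro B(2) slice_Cfun[OF F] xX x0) (auto intro: less_imp_le)
    then show "dist (\<nu> (\<lambda>ya. if ya \<in> topspace Y then F (x, ya) else 0)) (\<nu> (\<lambda>y. if y \<in> topspace Y then F (x0, y) else 0)) < e"
      using d by (simp add: dist_norm)
  qed (use U in auto)
qed

lemma swap_cont:
  assumes "continuous_map (prod_topology X Y) Z F"
  shows "continuous_map (prod_topology Y X) Z (\<lambda>p. F (snd p, fst p))"
proof -
  have "continuous_map (prod_topology Y X) (prod_topology X Y) (\<lambda>p. (snd p, fst p))"
    by (intro continuous_map_pairedI continuous_map_fst continuous_map_snd)
  then show ?thesis using continuous_map_compose[OF _ assms] by (simp add: o_def)
qed

lemma eps_le_zero:
  fixes a C :: real
  assumes "C \<ge> 0" "\<And>e. e > 0 \<Longrightarrow> a \<le> C * e"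
  shows "a \<le> 0"
proof (rule ccontr)
  assume "\<not> a \<le> 0"
  then have a: "a > 0" by simp
  have "a \<le> C * (a / (C + 1))" using assms(2)[of "a / (C+1)"] a assms(1) by simp
  also have "\<dots> < a" using a assms(1) by (simp add: field_simps)
  finally show False by simp
qed

lemma pou_bound:
  fixes g :: "'i \<Rightarrow> real" and d :: "'i \<Rightarrow> complex"
  assumes "finite D" "\<And>i. i \<in> D \<Longrightarrow> g i \<ge> 0" "(\<Sum>i\<in>D. g i) = 1"
    "\<And>i. i \<in> D \<Longrightarrow> g i > 0 \<Longrightarrow> cmod (d i) \<le> e"
  shows "cmod (\<Sum>i\<in>D. of_real (g i) * d i) \<le> e"
proof -
  have "cmod (\<Sum>i\<in>D. of_real (g i) * d i) \<le> (\<Sum>i\<in>D. cmod (of_real (g i) * d i))"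
    by (rule norm_sum)
  also have "\<dots> \<le> (\<Sum>i\<in>D. g i * e)"
  proof (rule sum_mono)
    fix i assume i: "i \<in> D"
    show "cmod (of_real (g i) * d i) \<le> g i * e"
    proof (cases "g i > 0")
      case True then show ?thesis using assms(4)[OF i True] by (simp add: norm_mult mult_left_mono)
    next
      case False then have "g i = 0" using assms(2)[OF i] by simp
      then show ?thesis by simp
    qed
  qed
  also have "\<dots> = e" using assms(3) by (simp add: sum_distrib_right[symmetric])
  finally show ?thesis .
qed

lemma fubini_meas:
  fixes F :: "'x \<times> 'y \<Rightarrow> complex"
  assumes X: "compact_space X" "Hausdorff_space X" "topspace X \<noteq> {}"
      and Y: "compact_space Y" "topspace Y \<noteq> {}"
      and F: "continuous_map (prod_topology X Y) euclidean F"
      and \<mu>: "\<mu> \<in> Meas X" and \<nu>: "\<nu> \<in> Meas Y"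
  shows "\<mu> (\<lambda>x. if x \<in> topspace X then \<nu> (\<lambda>y. if y \<in> topspace Y then F (x,y) else 0) else 0)
       = \<nu> (\<lambda>y. if y \<in> topspace Y then \<mu> (\<lambda>x. if x \<in> topspace X then F (x,y) else 0) else 0)"
    (is "?L = ?R")
proof -
  obtain B1 where B1: "B1 \<ge> 0" "\<And>u v e. u \<in> Cfun X \<Longrightarrow> v \<in> Cfun X \<Longrightarrow> (\<And>x. x \<in> topspace X \<Longrightarrow> cmod (u x - v x) \<le> e)
      \<Longrightarrow> cmod (\<mu> u - \<mu> v) \<le> B1 * e"
    using Meas_approx[OF \<mu> X(1,3)] by blast
  obtain B2 where B2: "B2 \<ge> 0" "\<And>u v e. u \<in> Cfun Y \<Longrightarrow> v \<in> Cfun Y \<Longrightarrow> (\<And>x. x \<in> topspace Y \<Longrightarrow> cmod (u x - v x) \<le> e)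
      \<Longrightarrow> cmod (\<nu> u - \<nu> v) \<le> B2 * e"
    using Meas_approx[OF \<nu> Y] by blast
  have F': "continuous_map (prod_topology Y X) euclidean (\<lambda>p. F (snd p, fst p))"
    by (rule swap_cont[OF F])
  have LC: "(\<lambda>x. if x \<in> topspace X then \<nu> (\<lambda>y. if y \<in> topspace Y then F (x,y) else 0) else 0) \<in> Cfun X"
    by (rule param_cont[OF Y F \<nu>])
  have RC: "(\<lambda>y. if y \<in> topspace Y then \<mu> (\<lambda>x. if x \<in> topspace X then F (x,y) else 0) else 0) \<in> Cfun Y"
    using param_cont[OF X(1,3) F' \<mu>] unfolding fst_conv snd_conv .
  have main: "cmod (?L - ?R) \<le> (2 * B1 * B2) * e" if e: "e > 0" for e
  proof -
    have "\<forall>x\<in>topspace X. \<exists>U. openin X U \<and> x \<in> U \<and> (\<forall>x'\<in>U. \<forall>y\<in>topspace Y. cmod (F (x',y) - F (x,y)) < e)"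
      using tube_close[OF Y(1) F _ e] by metis
    then obtain U where U: "\<And>x. x \<in> topspace X \<Longrightarrow> openin X (U x) \<and> x \<in> U x \<and> (\<forall>x'\<in>U x. \<forall>y\<in>topspace Y. cmod (F (x',y) - F (x,y)) < e)"
      by metis
    have nX: "normal_space X" using X by (simp add: compact_Hausdorff_or_regular_imp_normal_space)
    have t1: "t1_space X" using X(2) by (rule Hausdorff_imp_t1_space)
    have "\<forall>x\<in>topspace X. \<exists>h. continuous_map X (top_of_set {0..1::real}) h \<and> h ` (topspace X - U x) \<subseteq> {0} \<and> h ` {x} \<subseteq> {1}"
    proof
      fix x assume x: "x \<in> topspace X"
      have "closedin X (topspace X - U x)" using U[OF x] by blast
      moreover have "closedin X {x}" using t1 x by (simp add: t1_space_closedin_singleton)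
      moreover have "disjnt (topspace X - U x) {x}" using U[OF x] by auto
      ultimately obtain f where "continuous_map X (top_of_set {0..1::real}) f" "f ` (topspace X - U x) \<subseteq> {0}" "f ` {x} \<subseteq> {1}"
        using Urysohn_lemma[OF nX, of "topspace X - U x" "{x}" 0 1] by auto
      then show "\<exists>h. continuous_map X (top_of_set {0..1::real}) h \<and> h ` (topspace X - U x) \<subseteq> {0} \<and> h ` {x} \<subseteq> {1}"
        by blast
    qed
    then obtain h where h: "\<And>x. x \<in> topspace X \<Longrightarrow> continuous_map X (top_of_set {0..1::real}) (h x) \<and> h x ` (topspace X - U x) \<subseteq> {0} \<and> h x ` {x} \<subseteq> {1}"
      by metis
    have hc: "continuous_map X euclideanreal (h x)" if "x \<in> topspace X" for x
      using h[OF that] continuous_map_in_subtopology by blast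
    have hr: "0 \<le> h x x' \<and> h x x' \<le> 1" if "x \<in> topspace X" "x' \<in> topspace X" for x x'
      using h[OF that(1)] that(2) by (auto simp: continuous_map_def)
    have h0: "h x x' = 0" if "x \<in> topspace X" "x' \<in> topspace X" "x' \<notin> U x" for x x'
      using h[OF that(1)] that(2,3) by blast
    have h1: "h x x = 1" if "x \<in> topspace X" for x
      using h[OF that] by blast
    define W where "W x = {x' \<in> topspace X. h x x' \<in> {1/2<..}}" for x
    have "openin X (W x) \<and> x \<in> W x" if "x \<in> topspace X" for x
      unfolding W_def using openin_continuous_map_preimage[OF hc[OF that], of "{1/2<..}"] h1[OF that] that by auto
    then obtain D where D: "finite D" "D \<subseteq> topspace X" "topspace X \<subseteq> (\<Union>x\<in>D. W x)"
      using compact_point_cover[OF X(1)] by metis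
    define s where "s x' = (\<Sum>i\<in>D. h i x')" for x'
    have s_ge: "s x' \<ge> 1/2" if x': "x' \<in> topspace X" for x'
    proof -
      obtain i where i: "i \<in> D" "x' \<in> W i" using D x' by blast
      have "h i x' \<le> s x'" unfolding s_def
        using D(1,2) i(1) hr x' by (intro member_le_sum) auto
      then show ?thesis using i W_def by auto
    qed
    define g where "g i x' = h i x' / s x'" for i x'
    have g_nn: "g i x' \<ge> 0" if "i \<in> D" "x' \<in> topspace X" for i x'
      using hr[of i x'] s_ge[OF that(2)] that D(2) by (auto simp: g_def)
    have g_sum: "(\<Sum>i\<in>D. g i x') = 1" if "x' \<in> topspace X" for x'
      using s_ge[OF that] by (simp add: g_def s_def sum_divide_distrib[symmetric])
    have g_pos: "x' \<in> U i" if "i \<in> D" "x' \<in> topspace X" "g i x' > 0" for i x'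
      using h0[of i x'] that D(2) by (force simp: g_def)
    have g_cont: "continuous_map X euclideanreal (g i)" if "i \<in> D" for i
      unfolding g_def s_def using D that s_ge
      by (intro continuous_map_real_divide continuous_map_sum hc) (auto simp: s_def, metis mult_zero_left not_one_le_zero)
    define gc where "gc i = (\<lambda>x. if x \<in> topspace X then complex_of_real (g i x) else 0)" for i
    have gcC: "gc i \<in> Cfun X" if "i \<in> D" for i
      unfolding gc_def by (intro Cfun_ext0 continuous_map_of_real_comp g_cont that)
    define Fi where "Fi i = (\<lambda>y. if y \<in> topspace Y then F (i,y) else 0)" for i
    have FiC: "Fi i \<in> Cfun Y" if "i \<in> D" for i
      unfolding Fi_def using slice_Cfun[OF F] that D(2) by blast
    have pt: "cmod (F (x,y) - (\<Sum>i\<in>D. of_real (g i x) * F (i,y))) \<le> e"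
      if x: "x \<in> topspace X" and y: "y \<in> topspace Y" for x y
    proof -
      have "F (x,y) - (\<Sum>i\<in>D. of_real (g i x) * F (i,y)) = (\<Sum>i\<in>D. of_real (g i x) * (F (x,y) - F (i,y)))"
      proof -
        have "F (x,y) = (\<Sum>i\<in>D. of_real (g i x) * F (x,y))"
          using g_sum[OF x] by (simp add: sum_distrib_right[symmetric] of_real_sum[symmetric])
        then show ?thesis by (simp add: algebra_simps sum_subtractf)
      qed
      also have "cmod \<dots> \<le> e"
      proof (rule pou_bound[OF D(1)])
        show "\<And>i. i \<in> D \<Longrightarrow> 0 \<le> g i x" using g_nn x by blast
        show "sum (\<lambda>i. g i x) D = 1" using g_sum x by blast
        fix i assume i: "i \<in> D" "0 < g i x"
        then have "x \<in> U i" using g_pos x by blast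
        then show "cmod (F (x, y) - F (i, y)) \<le> e" using U[of i] i D(2) y by (auto intro: less_imp_le)
      qed
      finally show ?thesis .
    qed
    define LH where "LH = (\<lambda>x. \<Sum>i\<in>D. gc i x * \<nu> (Fi i))"
    define RH where "RH = (\<lambda>y. \<Sum>i\<in>D. \<mu> (gc i) * Fi i y)"
    have LHC: "LH \<in> Cfun X" unfolding LH_def using D(1) by (intro Cfun_sum Cfun_multc gcC)
    have RHC: "RH \<in> Cfun Y" unfolding RH_def using D(1) by (intro Cfun_sum Cfun_cmult FiC)
    have "cmod (?L - \<mu> LH) \<le> B1 * (B2 * e)"
    proof (rule B1(2)[OF LC LHC])
      fix x assume x: "x \<in> topspace X"
      have "LH x = \<nu> (\<lambda>y. \<Sum>i\<in>D. gc i x * Fi i y)"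
        unfolding LH_def using D(1) FiC by (simp add: Meas_sum[OF \<nu>] Cfun_cmult Meas_cmult[OF \<nu>])
      moreover have "cmod (\<nu> (\<lambda>y. if y \<in> topspace Y then F (x,y) else 0) - \<nu> (\<lambda>y. \<Sum>i\<in>D. gc i x * Fi i y)) \<le> B2 * e"
      proof (rule B2(2))
        show "(\<lambda>y. if y \<in> topspace Y then F (x,y) else 0) \<in> Cfun Y" using slice_Cfun[OF F x] .
        show "(\<lambda>y. \<Sum>i\<in>D. gc i x * Fi i y) \<in> Cfun Y" using D(1) by (intro Cfun_sum Cfun_cmult FiC)
        fix y assume y: "y \<in> topspace Y"
        show "cmod ((if y \<in> topspace Y then F (x, y) else 0) - (\<Sum>i\<in>D. gc i x * Fi i y)) \<le> e"
          using pt[OF x y] x y by (simp add: gc_def Fi_def)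
      qed
      ultimately show "cmod ((if x \<in> topspace X then \<nu> (\<lambda>y. if y \<in> topspace Y then F (x, y) else 0) else 0) - LH x) \<le> B2 * e"
        using x by simp
    qed
    moreover have "cmod (\<nu> RH - ?R) \<le> B2 * (B1 * e)"
    proof (rule B2(2)[OF RHC RC])
      fix y assume y: "y \<in> topspace Y"
      have "RH y = \<mu> (\<lambda>x. \<Sum>i\<in>D. gc i x * Fi i y)"
        unfolding RH_def using D(1) gcC by (simp add: Meas_sum[OF \<mu>] Cfun_multc Meas_multc[OF \<mu>])
      moreover have "cmod (\<mu> (\<lambda>x. \<Sum>i\<in>D. gc i x * Fi i y) - \<mu> (\<lambda>x. if x \<in> topspace X then F (x,y) else 0)) \<le> B1 * e"
      proof (rule B1(2))
        show "(\<lambda>x. if x \<in> topspace X then F (x,y) else 0) \<in> Cfun X" using slice_Cfun2[OF F y] .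
        show "(\<lambda>x. \<Sum>i\<in>D. gc i x * Fi i y) \<in> Cfun X" using D(1) by (intro Cfun_sum Cfun_multc gcC)
        fix x assume x: "x \<in> topspace X"
        show "cmod ((\<Sum>i\<in>D. gc i x * Fi i y) - (if x \<in> topspace X then F (x, y) else 0)) \<le> e"
          using pt[OF x y] x y by (simp add: gc_def Fi_def norm_minus_commute)
      qed
      ultimately show "cmod (RH y - (if y \<in> topspace Y then \<mu> (\<lambda>x. if x \<in> topspace X then F (x, y) else 0) else 0)) \<le> B1 * e"
        using y by simp
    qed
    moreover have "\<mu> LH = \<nu> RH"
    proof -
      have "\<mu> LH = (\<Sum>i\<in>D. \<mu> (gc i) * \<nu> (Fi i))"
        unfolding LH_def using D(1) gcC by (simp add: Meas_sum[OF \<mu>] Cfun_multc Meas_multc[OF \<mu>])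
      also have "\<dots> = \<nu> RH"
        unfolding RH_def using D(1) FiC by (simp add: Meas_sum[OF \<nu>] Cfun_cmult Meas_cmult[OF \<nu>])
      finally show ?thesis .
    qed
    ultimately have "cmod (?L - ?R) \<le> B1 * (B2 * e) + B2 * (B1 * e)"
    proof -
      assume a1: "cmod (?L - \<mu> LH) \<le> B1 * (B2 * e)" and a2: "cmod (\<nu> RH - ?R) \<le> B2 * (B1 * e)"
        and eq: "\<mu> LH = \<nu> RH"
      have eq2: "?L - ?R = (?L - \<mu> LH) + (\<nu> RH - ?R)" using eq by simp
      have "cmod ((?L - \<mu> LH) + (\<nu> RH - ?R)) \<le> cmod (?L - \<mu> LH) + cmod (\<nu> RH - ?R)"
        by (rule norm_triangle_ineq)
      then have "cmod (?L - ?R) \<le> cmod (?L - \<mu> LH) + cmod (\<nu> RH - ?R)"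
        unfolding eq2[symmetric] .
      then show ?thesis using a1 a2 by linarith
    qed
    then show ?thesis by (simp add: algebra_simps)
  qed
  have "cmod (?L - ?R) \<le> 0"
    using B1(1) B2(1) by (intro eps_le_zero[of "2 * B1 * B2"] main) auto
  then show ?thesis by simp
qed


locale cgrp =
  fixes G (structure) and T :: "'a topology"
  assumes cg: "compact_group G T"
begin

lemma grp: "group G" and top: "topspace T = carrier G" and cpt: "compact_space T"
  and haus: "Hausdorff_space T"
  and mcont: "continuous_map (prod_topology T T) T (\<lambda>p. fst p \<otimes> snd p)"
  and icont: "continuous_map T T (\<lambda>x. inv x)"
  using cg by (auto simp: compact_group_def)

sublocale group G by (rule grp)

lemma ne: "topspace T \<noteq> {}" using top by auto

lemma mult_cont [continuous_intros]:
  "continuous_map X T f \<Longrightarrow> continuous_map X T g \<Longrightarrow> continuous_map X T (\<lambda>x. f x \<otimes> g x)"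
  using continuous_map_compose[OF continuous_map_pairedI mcont, of X f g] by (simp add: o_def)

lemma inv_cont [continuous_intros]:
  "continuous_map X T f \<Longrightarrow> continuous_map X T (\<lambda>x. inv (f x))"
  using continuous_map_compose[OF _ icont, of X f] by (simp add: o_def)

lemma const_cont [continuous_intros]:
  "a \<in> carrier G \<Longrightarrow> continuous_map X T (\<lambda>x. a)"
  by (simp add: top)

lemma id_cont [continuous_intros]: "continuous_map T T (\<lambda>x. x)"
  by (simp add: continuous_map_id[unfolded id_def])

lemma fst_cont [continuous_intros]: "continuous_map (prod_topology T T) T fst"
  by (rule continuous_map_fst)
lemma snd_cont [continuous_intros]: "continuous_map (prod_topology T T) T snd"
  by (rule continuous_map_snd)

lemma Cfun_compT:
  "u \<in> Cfun T \<Longrightarrow> continuous_map X T h \<Longrightarrow> (\<lambda>x. if x \<in> topspace X then u (h x) else 0) \<in> Cfun X"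
  by (rule Cfun_comp)

lemma Cfun_cont_comp: "u \<in> Cfun T \<Longrightarrow> continuous_map X T h \<Longrightarrow> continuous_map X euclidean (\<lambda>x. u (h x))"
  using continuous_map_compose[of X T h euclidean u] Cfun_cont by (auto simp: o_def)

definition cinv :: "(('a \<Rightarrow> complex) \<Rightarrow> complex) \<Rightarrow> bool" where
  "cinv \<mu> \<longleftrightarrow> (\<forall>x\<in>carrier G. \<forall>u\<in>Cfun T. \<mu> (\<lambda>s. if s \<in> topspace T then u (x \<otimes> s \<otimes> inv x) else 0) = \<mu> u)"

lemma inner_Cfun:
  assumes "u \<in> Cfun T" "\<nu> \<in> Meas T"
  shows "(\<lambda>s. if s \<in> topspace T then \<nu> (\<lambda>t. if t \<in> topspace T then u (s \<otimes> t) else 0) else 0) \<in> Cfun T"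
proof -
  have "continuous_map (prod_topology T T) euclidean (\<lambda>p. u (fst p \<otimes> snd p))"
    using assms(1) by (intro Cfun_cont_comp continuous_intros)
  from param_cont[OF cpt ne this assms(2)] show ?thesis unfolding fst_conv snd_conv .
qed

lemma inner_Cfun':
  assumes "u \<in> Cfun T" "\<nu> \<in> Meas T"
  shows "(\<lambda>s. if s \<in> topspace T then \<nu> (\<lambda>t. if t \<in> topspace T then u (t \<otimes> s) else 0) else 0) \<in> Cfun T"
proof -
  have "continuous_map (prod_topology T T) euclidean (\<lambda>p. u (snd p \<otimes> fst p))"
    using assms(1) by (intro Cfun_cont_comp continuous_intros)
  from param_cont[OF cpt ne this assms(2)] show ?thesis unfolding fst_conv snd_conv .
qed

lemma dirac_apply: "u \<in> Cfun T \<Longrightarrow> dirac T a u = u a"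
  by (simp add: dirac_def)

lemma central_imp_cinv:
  assumes "\<mu> \<in> ZM G T"
  shows "cinv \<mu>"
  unfolding cinv_def
proof (intro ballI)
  have \<mu>: "\<mu> \<in> Meas T" using assms by (simp add: ZM_def)
  have key: "\<mu> (\<lambda>s. if s \<in> topspace T then w (s \<otimes> a) else 0) = \<mu> (\<lambda>t. if t \<in> topspace T then w (a \<otimes> t) else 0)"
    if a: "a \<in> carrier G" and w: "w \<in> Cfun T" for a w
  proof -
    have d: "dirac T a \<in> Meas T" using a by (intro dirac_Meas cpt) (simp add: top)
    have "conv G T \<mu> (dirac T a) w = conv G T (dirac T a) \<mu> w"
      using assms d by (simp add: ZM_def)
    moreover have "conv G T \<mu> (dirac T a) w = \<mu> (\<lambda>s. if s \<in> topspace T then w (s \<otimes> a) else 0)"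
    proof -
      have "(\<lambda>s. if s \<in> topspace T then dirac T a (\<lambda>t. if t \<in> topspace T then w (s \<otimes> t) else 0) else 0)
           = (\<lambda>s. if s \<in> topspace T then w (s \<otimes> a) else 0)"
      proof
        fix s show "(if s \<in> topspace T then dirac T a (\<lambda>t. if t \<in> topspace T then w (s \<otimes> t) else 0) else 0)
           = (if s \<in> topspace T then w (s \<otimes> a) else 0)"
        proof (cases "s \<in> topspace T")
          case True
          have "(\<lambda>t. if t \<in> topspace T then w (s \<otimes> t) else 0) \<in> Cfun T"
            using True w by (intro Cfun_compT continuous_intros) (auto simp: top)
          then show ?thesis using True a by (simp add: dirac_apply top)
        qed simp
      qed
      then show ?thesis using w by (simp add: conv_def)
    qed
    moreover have "conv G T (dirac T a) \<mu> w = \<mu> (\<lambda>t. if t \<in> topspace T then w (a \<otimes> t) else 0)"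
      using w inner_Cfun[OF w \<mu>] a by (simp add: conv_def dirac_apply top)
    ultimately show ?thesis by simp
  qed
  fix x u assume x: "x \<in> carrier G" and u: "u \<in> Cfun T"
  define w where "w = (\<lambda>s. if s \<in> topspace T then u (s \<otimes> inv x) else 0)"
  have wC: "w \<in> Cfun T" unfolding w_def using u x by (intro Cfun_compT continuous_intros) auto
  have "\<mu> u = \<mu> (\<lambda>s. if s \<in> topspace T then w (s \<otimes> x) else 0)"
  proof -
    have "(\<lambda>s. if s \<in> topspace T then w (s \<otimes> x) else 0) = u"
      using u x by (intro ext) (auto simp: w_def top m_assoc Cfun_out)
    then show ?thesis by simp
  qed
  also have "\<dots> = \<mu> (\<lambda>t. if t \<in> topspace T then w (x \<otimes> t) else 0)" by (rule key[OF x wC])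
  also have "(\<lambda>t. if t \<in> topspace T then w (x \<otimes> t) else 0) = (\<lambda>s. if s \<in> topspace T then u (x \<otimes> s \<otimes> inv x) else 0)"
    using x by (intro ext) (auto simp: w_def top)
  finally show "\<mu> (\<lambda>s. if s \<in> topspace T then u (x \<otimes> s \<otimes> inv x) else 0) = \<mu> u" by simp
qed

lemma cinv_imp_central:
  assumes \<mu>: "\<mu> \<in> Meas T" and ci: "cinv \<mu>"
  shows "\<mu> \<in> ZM G T"
  unfolding ZM_def
proof (intro CollectI conjI ballI \<mu>)
  fix \<nu> assume \<nu>: "\<nu> \<in> Meas T"
  show "conv G T \<mu> \<nu> = conv G T \<nu> \<mu>"
  proof
    fix u show "conv G T \<mu> \<nu> u = conv G T \<nu> \<mu> u"
    proof (cases "u \<in> Cfun T")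
      case False then show ?thesis by (simp add: conv_def)
    next
      case u: True
      have F: "continuous_map (prod_topology T T) euclidean (\<lambda>p. u (fst p \<otimes> snd p))"
        using u by (intro Cfun_cont_comp continuous_intros)
      have "(\<lambda>s. if s \<in> topspace T then \<mu> (\<lambda>t. if t \<in> topspace T then u (s \<otimes> t) else 0) else 0)
          = (\<lambda>s. if s \<in> topspace T then \<mu> (\<lambda>t. if t \<in> topspace T then u (t \<otimes> s) else 0) else 0)"
      proof
        fix s show "(if s \<in> topspace T then \<mu> (\<lambda>t. if t \<in> topspace T then u (s \<otimes> t) else 0) else 0)
          = (if s \<in> topspace T then \<mu> (\<lambda>t. if t \<in> topspace T then u (t \<otimes> s) else 0) else 0)"
        proof (cases "s \<in> topspace T")
          case True
          define w where "w = (\<lambda>t. if t \<in> topspace T then u (t \<otimes> s) else 0)"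
          have wC: "w \<in> Cfun T" unfolding w_def using u True by (intro Cfun_compT continuous_intros) (auto simp: top)
          have "\<mu> (\<lambda>t. if t \<in> topspace T then w (s \<otimes> t \<otimes> inv s) else 0) = \<mu> w"
            using ci wC True by (auto simp: cinv_def top)
          moreover have "(\<lambda>t. if t \<in> topspace T then w (s \<otimes> t \<otimes> inv s) else 0) = (\<lambda>t. if t \<in> topspace T then u (s \<otimes> t) else 0)"
            using True by (intro ext) (auto simp: w_def top m_assoc)
          ultimately show ?thesis using True by (simp add: w_def)
        qed simp
      qed
      then have "conv G T \<nu> \<mu> u = \<nu> (\<lambda>s. if s \<in> topspace T then \<mu> (\<lambda>t. if t \<in> topspace T then u (t \<otimes> s) else 0) else 0)"
        using u by (simp add: conv_def)
      also have "\<dots> = \<mu> (\<lambda>t. if t \<in> topspace T then \<nu> (\<lambda>s. if s \<in> topspace T then u (t \<otimes> s) else 0) else 0)"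
        using fubini_meas[OF cpt haus ne cpt ne F \<mu> \<nu>] unfolding fst_conv snd_conv by (rule sym)
      also have "\<dots> = conv G T \<mu> \<nu> u" using u by (simp add: conv_def)
      finally show ?thesis by simp
    qed
  qed
qed

lemma ZM_iff: "\<mu> \<in> ZM G T \<longleftrightarrow> \<mu> \<in> Meas T \<and> cinv \<mu>"
  using central_imp_cinv cinv_imp_central by (auto simp: ZM_def)

end

lemma cgrp_prod:
  assumes "cgrp G T"
  shows "cgrp (G \<times>\<times> G) (prod_topology T T)"
proof -
  interpret cgrp G T by fact
  have mc: "continuous_map (prod_topology (prod_topology T T) (prod_topology T T)) (prod_topology T T)
      (\<lambda>p. fst p \<otimes>\<^bsub>G \<times>\<times> G\<^esub> snd p)"
  proof -
    have "continuous_map (prod_topology (prod_topology T T) (prod_topology T T)) (prod_topology T T)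
      (\<lambda>p. (fst (fst p) \<otimes>\<^bsub>G\<^esub> fst (snd p), snd (fst p) \<otimes>\<^bsub>G\<^esub> snd (snd p)))"
      by (intro continuous_map_pairedI mult_cont continuous_map_compose[OF continuous_map_fst continuous_map_fst, unfolded o_def]
          continuous_map_compose[OF continuous_map_snd continuous_map_fst, unfolded o_def]
          continuous_map_compose[OF continuous_map_fst continuous_map_snd, unfolded o_def]
          continuous_map_compose[OF continuous_map_snd continuous_map_snd, unfolded o_def])
    then show ?thesis by (simp add: mult_DirProd')
  qed
  have ic: "continuous_map (prod_topology T T) (prod_topology T T) (\<lambda>p. inv\<^bsub>G \<times>\<times> G\<^esub> p)"
  proof -
    have "continuous_map (prod_topology T T) (prod_topology T T) (\<lambda>p. (inv\<^bsub>G\<^esub> (fst p), inv\<^bsub>G\<^esub> (snd p)))"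
      by (intro continuous_map_pairedI inv_cont continuous_map_fst continuous_map_snd)
    then show ?thesis
      by (rule continuous_map_eq) (auto simp: top inv_DirProd[OF grp grp])
  qed
  show ?thesis
    unfolding cgrp_def compact_group_def
    using mc ic DirProd_group[OF grp grp] cpt haus
    by (auto simp: top compact_space_prod_topology Hausdorff_space_prod_topology)
qed


context cgrp
begin

lemma cancel1 [simp]: "x \<in> carrier G \<Longrightarrow> y \<in> carrier G \<Longrightarrow> x \<otimes> (inv x \<otimes> y) = y"
  by (simp add: m_assoc[symmetric])
lemma cancel2 [simp]: "x \<in> carrier G \<Longrightarrow> y \<in> carrier G \<Longrightarrow> inv x \<otimes> (x \<otimes> y) = y"
  by (simp add: m_assoc[symmetric])

abbreviation "T2 \<equiv> prod_topology T T"

lemma Mu_Cfun: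
  "u \<in> Cfun T \<Longrightarrow> (\<lambda>p. if p \<in> topspace T2 then u (fst p \<otimes> snd p) else 0) \<in> Cfun T2"
  by (intro Cfun_compT continuous_intros)

lemma mtilde_apply:
  "u \<in> Cfun T \<Longrightarrow> mtilde G T \<mu> u = \<mu> (\<lambda>p. if p \<in> topspace T2 then u (fst p \<otimes> snd p) else 0)"
  by (simp add: mtilde_def)

lemma mtilde_Meas:
  assumes \<mu>: "\<mu> \<in> Meas T2"
  shows "mtilde G T \<mu> \<in> Meas T"
proof -
  interpret P: cgrp "G \<times>\<times> G" T2 by (rule cgrp_prod) (rule cgrp_axioms)
  obtain B where B: "B \<ge> 0" "\<And>u. u \<in> Cfun T2 \<Longrightarrow> cmod (\<mu> u) \<le> B * supnorm T2 u"
    using Meas_bound[OF \<mu> P.cpt P.ne] by blast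
  show ?thesis
    unfolding Meas_def
  proof (intro CollectI conjI ballI allI impI)
    fix u v assume u: "u \<in> Cfun T" and v: "v \<in> Cfun T"
    have "(\<lambda>p. if p \<in> topspace T2 then u (fst p \<otimes> snd p) + v (fst p \<otimes> snd p) else 0)
        = (\<lambda>p. (if p \<in> topspace T2 then u (fst p \<otimes> snd p) else 0) + (if p \<in> topspace T2 then v (fst p \<otimes> snd p) else 0))"
      by auto
    then show "mtilde G T \<mu> (\<lambda>x. u x + v x) = mtilde G T \<mu> u + mtilde G T \<mu> v"
      using u v Cfun_add[OF u v] Meas_add[OF \<mu> Mu_Cfun[OF u] Mu_Cfun[OF v]] by (simp add: mtilde_apply)
  next
    fix c u assume u: "u \<in> Cfun T"
    have "(\<lambda>p. if p \<in> topspace T2 then c * u (fst p \<otimes> snd p) else 0)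
        = (\<lambda>p. c * (if p \<in> topspace T2 then u (fst p \<otimes> snd p) else 0))"
      by auto
    then show "mtilde G T \<mu> (\<lambda>x. c * u x) = c * mtilde G T \<mu> u"
      using u Cfun_cmult[OF u] Meas_cmult[OF \<mu> Mu_Cfun[OF u]] by (simp add: mtilde_apply)
  next
    show "\<exists>B. \<forall>u\<in>Cfun T. cmod (mtilde G T \<mu> u) \<le> B * supnorm T u"
    proof (intro exI ballI)
      fix u assume u: "u \<in> Cfun T"
      have "cmod (mtilde G T \<mu> u) \<le> B * supnorm T2 (\<lambda>p. if p \<in> topspace T2 then u (fst p \<otimes> snd p) else 0)"
        using B(2)[OF Mu_Cfun[OF u]] u by (simp add: mtilde_apply)
      also have "\<dots> \<le> B * supnorm T u"
      proof (rule mult_left_mono[OF _ B(1)], rule supnorm_le[OF P.ne])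
        fix p assume "p \<in> topspace T2"
        then show "cmod (if p \<in> topspace T2 then u (fst p \<otimes> snd p) else 0) \<le> supnorm T u"
          using supnorm_ge[OF cpt u] by (auto simp: top)
      qed
      finally show "cmod (mtilde G T \<mu> u) \<le> B * supnorm T u" .
    qed
  next
    fix u assume "u \<notin> Cfun T"
    then show "mtilde G T \<mu> u = 0" by (simp add: mtilde_def)
  qed
qed

lemma mtilde_cinv:
  assumes \<mu>: "\<mu> \<in> ZM (G \<times>\<times> G) T2"
  shows "mtilde G T \<mu> \<in> ZM G T"
proof -
  interpret P: cgrp "G \<times>\<times> G" T2 by (rule cgrp_prod) (rule cgrp_axioms)
  have \<mu>M: "\<mu> \<in> Meas T2" and ci: "P.cinv \<mu>" using \<mu> P.ZM_iff by auto
  show ?thesis unfolding ZM_iff cinv_def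
  proof (intro conjI mtilde_Meas \<mu>M ballI)
    fix x u assume x: "x \<in> carrier G" and u: "u \<in> Cfun T"
    have cu: "(\<lambda>s. if s \<in> topspace T then u (x \<otimes> s \<otimes> inv x) else 0) \<in> Cfun T"
      using x u by (intro Cfun_compT continuous_intros) auto
    have xx: "(x,x) \<in> carrier (G \<times>\<times> G)" using x by simp
    have "\<mu> (\<lambda>p. if p \<in> topspace T2 then (\<lambda>p. if p \<in> topspace T2 then u (fst p \<otimes> snd p) else 0)
            ((x,x) \<otimes>\<^bsub>G \<times>\<times> G\<^esub> p \<otimes>\<^bsub>G \<times>\<times> G\<^esub> inv\<^bsub>G \<times>\<times> G\<^esub> (x,x)) else 0)
        = \<mu> (\<lambda>p. if p \<in> topspace T2 then u (fst p \<otimes> snd p) else 0)"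
      by (rule bspec[OF bspec[OF ci[unfolded P.cinv_def] xx] Mu_Cfun[OF u]])
    moreover have "(\<lambda>p. if p \<in> topspace T2 then (\<lambda>p. if p \<in> topspace T2 then u (fst p \<otimes> snd p) else 0)
            ((x,x) \<otimes>\<^bsub>G \<times>\<times> G\<^esub> p \<otimes>\<^bsub>G \<times>\<times> G\<^esub> inv\<^bsub>G \<times>\<times> G\<^esub> (x,x)) else 0)
        = (\<lambda>p. if p \<in> topspace T2 then (if fst p \<otimes> snd p \<in> topspace T then u (x \<otimes> (fst p \<otimes> snd p) \<otimes> inv x) else 0) else 0)"
      using x by (intro ext) (auto simp: top inv_DirProd[OF grp grp] mult_DirProd' m_assoc)
    ultimately show "mtilde G T \<mu> (\<lambda>s. if s \<in> topspace T then u (x \<otimes> s \<otimes> inv x) else 0) = mtilde G T \<mu> u"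
      using u cu by (simp add: mtilde_apply)
  qed
qed

lemma mtilde_onto:
  assumes \<mu>: "\<mu> \<in> ZM G T"
  shows "\<mu> \<in> mtilde G T ` ZM (G \<times>\<times> G) T2"
proof -
  interpret P: cgrp "G \<times>\<times> G" T2 by (rule cgrp_prod) (rule cgrp_axioms)
  have \<mu>M: "\<mu> \<in> Meas T" and ci: "cinv \<mu>" using \<mu> ZM_iff by auto
  obtain B where B: "B \<ge> 0" "\<And>u. u \<in> Cfun T \<Longrightarrow> cmod (\<mu> u) \<le> B * supnorm T u"
    using Meas_bound[OF \<mu>M cpt ne] by blast
  define sl where "sl F = (\<lambda>s. if s \<in> topspace T then F (s, \<one>) else 0)" for F :: "'a \<times> 'a \<Rightarrow> complex"
  have slC: "sl F \<in> Cfun T" if "F \<in> Cfun T2" for F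
  proof -
    have "continuous_map T T2 (\<lambda>s. (s, \<one>))" by (intro continuous_map_pairedI continuous_intros) simp
    from Cfun_comp[OF that this] show ?thesis by (simp add: sl_def)
  qed
  define \<nu> where "\<nu> = (\<lambda>F. if F \<in> Cfun T2 then \<mu> (sl F) else 0)"
  have \<nu>M: "\<nu> \<in> Meas T2"
    unfolding Meas_def
  proof (intro CollectI conjI ballI allI impI)
    fix u v assume u: "u \<in> Cfun T2" and v: "v \<in> Cfun T2"
    have "sl (\<lambda>x. u x + v x) = (\<lambda>s. sl u s + sl v s)" by (auto simp: sl_def)
    then show "\<nu> (\<lambda>x. u x + v x) = \<nu> u + \<nu> v"
      using u v Cfun_add[OF u v] by (simp add: \<nu>_def Meas_add[OF \<mu>M] slC)
  next
    fix c u assume u: "u \<in> Cfun T2"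
    have "sl (\<lambda>x. c * u x) = (\<lambda>s. c * sl u s)" by (auto simp: sl_def)
    then show "\<nu> (\<lambda>x. c * u x) = c * \<nu> u"
      using u Cfun_cmult[OF u] by (simp add: \<nu>_def Meas_cmult[OF \<mu>M] slC)
  next
    show "\<exists>B. \<forall>u\<in>Cfun T2. cmod (\<nu> u) \<le> B * supnorm T2 u"
    proof (intro exI ballI)
      fix u assume u: "u \<in> Cfun T2"
      have "cmod (\<nu> u) \<le> B * supnorm T (sl u)" using B(2)[OF slC[OF u]] u by (simp add: \<nu>_def)
      also have "\<dots> \<le> B * supnorm T2 u"
      proof (rule mult_left_mono[OF _ B(1)], rule supnorm_le[OF ne])
        fix s assume "s \<in> topspace T"
        then show "cmod (sl u s) \<le> supnorm T2 u"
          using supnorm_ge[OF P.cpt u, of "(s, \<one>)"] by (auto simp: sl_def top)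
      qed
      finally show "cmod (\<nu> u) \<le> B * supnorm T2 u" .
    qed
  qed (simp add: \<nu>_def)
  have \<nu>ci: "P.cinv \<nu>"
    unfolding P.cinv_def
  proof (intro ballI)
    fix xy F assume xy: "xy \<in> carrier (G \<times>\<times> G)" and F: "F \<in> Cfun T2"
    obtain x y where xy': "xy = (x,y)" "x \<in> carrier G" "y \<in> carrier G" using xy by auto
    have cF: "(\<lambda>s. if s \<in> topspace T2 then F (xy \<otimes>\<^bsub>G \<times>\<times> G\<^esub> s \<otimes>\<^bsub>G \<times>\<times> G\<^esub> inv\<^bsub>G \<times>\<times> G\<^esub> xy) else 0) \<in> Cfun T2"
      using F xy by (intro P.Cfun_compT continuous_intros) auto
    have "sl (\<lambda>s. if s \<in> topspace T2 then F (xy \<otimes>\<^bsub>G \<times>\<times> G\<^esub> s \<otimes>\<^bsub>G \<times>\<times> G\<^esub> inv\<^bsub>G \<times>\<times> G\<^esub> xy) else 0)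
        = (\<lambda>s. if s \<in> topspace T then sl F (x \<otimes> s \<otimes> inv x) else 0)"
      using xy' by (intro ext) (auto simp: sl_def top inv_DirProd[OF grp grp])
    then show "\<nu> (\<lambda>s. if s \<in> topspace T2 then F (xy \<otimes>\<^bsub>G \<times>\<times> G\<^esub> s \<otimes>\<^bsub>G \<times>\<times> G\<^esub> inv\<^bsub>G \<times>\<times> G\<^esub> xy) else 0) = \<nu> F"
      using cF F ci slC[OF F] xy' by (simp add: \<nu>_def cinv_def)
  qed
  have "mtilde G T \<nu> = \<mu>"
  proof
    fix u show "mtilde G T \<nu> u = \<mu> u"
    proof (cases "u \<in> Cfun T")
      case True
      have "sl (\<lambda>p. if p \<in> topspace T2 then u (fst p \<otimes> snd p) else 0) = u"
        using True by (intro ext) (auto simp: sl_def top Cfun_out)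
      then show ?thesis using True Mu_Cfun[OF True] by (simp add: mtilde_apply \<nu>_def)
    qed (simp add: mtilde_def Meas_out[OF \<mu>M])
  qed
  moreover have "\<nu> \<in> ZM (G \<times>\<times> G) T2" using \<nu>M \<nu>ci P.ZM_iff by blast
  ultimately show ?thesis by blast
qed

lemma mtilde_hom:
  assumes \<mu>: "\<mu> \<in> ZM (G \<times>\<times> G) T2" and \<nu>: "\<nu> \<in> ZM (G \<times>\<times> G) T2"
  shows "mtilde G T (conv (G \<times>\<times> G) T2 \<mu> \<nu>) = conv G T (mtilde G T \<mu>) (mtilde G T \<nu>)"
proof
  interpret P: cgrp "G \<times>\<times> G" T2 by (rule cgrp_prod) (rule cgrp_axioms)
  have \<mu>M: "\<mu> \<in> Meas T2" using \<mu> P.ZM_iff by auto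
  have \<nu>M: "\<nu> \<in> Meas T2" and ci: "P.cinv \<nu>" using \<nu> P.ZM_iff by auto
  fix u show "mtilde G T (conv (G \<times>\<times> G) T2 \<mu> \<nu>) u = conv G T (mtilde G T \<mu>) (mtilde G T \<nu>) u"
  proof (cases "u \<in> Cfun T")
    case False then show ?thesis by (simp add: mtilde_def conv_def)
  next
    case u: True
    have inC: "(\<lambda>t. if t \<in> topspace T then u (s \<otimes> t) else 0) \<in> Cfun T" if "s \<in> topspace T" for s
      using u that by (intro Cfun_compT continuous_intros) (auto simp: top)
    have Fc: "continuous_map (prod_topology T T2) euclidean (\<lambda>p. u (fst p \<otimes> (fst (snd p) \<otimes> snd (snd p))))"
      using u by (intro Cfun_cont_comp continuous_intros continuous_map_compose[OF continuous_map_snd, unfolded o_def])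
    have WC: "(\<lambda>s. if s \<in> topspace T then mtilde G T \<nu> (\<lambda>t. if t \<in> topspace T then u (s \<otimes> t) else 0) else 0) \<in> Cfun T"
    proof -
      have "(\<lambda>s. if s \<in> topspace T then mtilde G T \<nu> (\<lambda>t. if t \<in> topspace T then u (s \<otimes> t) else 0) else 0)
          = (\<lambda>s. if s \<in> topspace T then \<nu> (\<lambda>q. if q \<in> topspace T2 then u (fst (s, q) \<otimes> (fst (snd (s, q)) \<otimes> snd (snd (s, q)))) else 0) else 0)"
        using inC by (intro ext) (auto simp: mtilde_apply top mem_Times_iff cong: if_cong)
      then show ?thesis using param_cont[OF P.cpt P.ne Fc \<nu>M] by simp
    qed
    have "mtilde G T (conv (G \<times>\<times> G) T2 \<mu> \<nu>) u
        = \<mu> (\<lambda>p. if p \<in> topspace T2 then \<nu> (\<lambda>q. if q \<in> topspace T2 then u (fst p \<otimes> fst q \<otimes> (snd p \<otimes> snd q)) else 0) else 0)"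
    proof -
      have "(\<lambda>p. if p \<in> topspace T2 then \<nu> (\<lambda>q. if q \<in> topspace T2 then (if p \<otimes>\<^bsub>G \<times>\<times> G\<^esub> q \<in> topspace T2 then u (fst (p \<otimes>\<^bsub>G \<times>\<times> G\<^esub> q) \<otimes> snd (p \<otimes>\<^bsub>G \<times>\<times> G\<^esub> q)) else 0) else 0) else 0)
          = (\<lambda>p. if p \<in> topspace T2 then \<nu> (\<lambda>q. if q \<in> topspace T2 then u (fst p \<otimes> fst q \<otimes> (snd p \<otimes> snd q)) else 0) else 0)"
        by (intro ext if_cong refl arg_cong[where f=\<nu>]) (auto simp: top mult_DirProd')
      then show ?thesis using u Mu_Cfun[OF u] by (simp add: mtilde_apply conv_def)
    qed
    also have "\<dots> = \<mu> (\<lambda>p. if p \<in> topspace T2 then \<nu> (\<lambda>q. if q \<in> topspace T2 then u (fst p \<otimes> snd p \<otimes> (fst q \<otimes> snd q)) else 0) else 0)"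
    proof (rule arg_cong[where f=\<mu>], rule ext)
      fix p show "(if p \<in> topspace T2 then \<nu> (\<lambda>q. if q \<in> topspace T2 then u (fst p \<otimes> fst q \<otimes> (snd p \<otimes> snd q)) else 0) else 0)
         = (if p \<in> topspace T2 then \<nu> (\<lambda>q. if q \<in> topspace T2 then u (fst p \<otimes> snd p \<otimes> (fst q \<otimes> snd q)) else 0) else 0)"
      proof (cases "p \<in> topspace T2")
        case True
        obtain a b where p: "p = (a,b)" "a \<in> carrier G" "b \<in> carrier G" using True by (cases p) (auto simp: top)
        define F where "F = (\<lambda>q. if q \<in> topspace T2 then u (a \<otimes> fst q \<otimes> (b \<otimes> snd q)) else 0)"
        have FC: "F \<in> Cfun T2" unfolding F_def using u p by (intro Cfun_compT continuous_intros) auto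
        have b1: "(b, \<one>) \<in> carrier (G \<times>\<times> G)" using p by simp
        have "\<nu> (\<lambda>q. if q \<in> topspace T2 then F ((b,\<one>) \<otimes>\<^bsub>G \<times>\<times> G\<^esub> q \<otimes>\<^bsub>G \<times>\<times> G\<^esub> inv\<^bsub>G \<times>\<times> G\<^esub> (b,\<one>)) else 0) = \<nu> F"
          by (rule bspec[OF bspec[OF ci[unfolded P.cinv_def] b1] FC])
        moreover have "(\<lambda>q. if q \<in> topspace T2 then F ((b,\<one>) \<otimes>\<^bsub>G \<times>\<times> G\<^esub> q \<otimes>\<^bsub>G \<times>\<times> G\<^esub> inv\<^bsub>G \<times>\<times> G\<^esub> (b,\<one>)) else 0)
            = (\<lambda>q. if q \<in> topspace T2 then u (a \<otimes> b \<otimes> (fst q \<otimes> snd q)) else 0)"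
          using p by (intro ext) (auto simp: F_def top inv_DirProd[OF grp grp] mult_DirProd' m_assoc)
        ultimately show ?thesis using True unfolding p(1) fst_conv snd_conv F_def by simp
      qed simp
    qed
    also have "\<dots> = conv G T (mtilde G T \<mu>) (mtilde G T \<nu>) u"
    proof -
      have "(\<lambda>p. if p \<in> topspace T2 then (if fst p \<otimes> snd p \<in> topspace T then mtilde G T \<nu> (\<lambda>t. if t \<in> topspace T then u (fst p \<otimes> snd p \<otimes> t) else 0) else 0) else 0)
          = (\<lambda>p. if p \<in> topspace T2 then \<nu> (\<lambda>q. if q \<in> topspace T2 then u (fst p \<otimes> snd p \<otimes> (fst q \<otimes> snd q)) else 0) else 0)"
        using inC by (intro ext) (auto simp: mtilde_apply top mem_Times_iff cong: if_cong)
      then show ?thesis using u WC by (simp add: conv_def mtilde_apply)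
    qed
    finally show ?thesis .
  qed
qed

lemma mtilde_lin:
  "mtilde G T (\<lambda>u. a * \<mu> u + b * \<nu> u) = (\<lambda>u. a * mtilde G T \<mu> u + b * mtilde G T \<nu> u)"
  by (auto simp: mtilde_def)

end

locale hgrp = cgrp +
  fixes m :: "'a measure"
  assumes haar: "haar_measure G T m"
begin

lemma space_m: "space m = topspace T" and sets_m: "sets m = sets (borel_of T)"
  and prob: "prob_space m"
  and linv: "\<And>x A. x \<in> carrier G \<Longrightarrow> A \<in> sets m \<Longrightarrow> emeasure m ((\<lambda>s. x \<otimes> s) ` A) = emeasure m A"
  using haar by (auto simp: haar_measure_def)

lemma sets_m': "sets m = sigma_sets (topspace T) {U. openin T U}"
  unfolding sets_m borel_of_def by (rule sets_measure_of) (auto dest: openin_subset)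

lemma open_sets: "openin T U \<Longrightarrow> U \<in> sets m"
  by (simp add: sets_m')

lemma cont_borel:
  fixes f :: "'a \<Rightarrow> 'z::topological_space"
  assumes "continuous_map T euclidean f"
  shows "f \<in> borel_measurable m"
proof (rule borel_measurableI)
  fix S :: "'z set" assume "open S"
  then have "openin T {x \<in> topspace T. f x \<in> S}"
    using openin_continuous_map_preimage[OF assms] by simp
  then show "f -` S \<inter> space m \<in> sets m" using open_sets by (simp add: space_m Int_def conj_commute)
qed

lemma cont_meas:
  assumes "continuous_map T T h"
  shows "h \<in> measurable m m"
proof (rule measurable_sigma_sets[OF sets_m'])
  show "{U. openin T U} \<subseteq> Pow (topspace T)" by (auto dest: openin_subset)
  show "h \<in> space m \<rightarrow> topspace T" using assms by (auto simp: space_m continuous_map_def)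
  fix U assume "U \<in> {U. openin T U}"
  then have "openin T {x \<in> topspace T. h x \<in> U}" using openin_continuous_map_preimage[OF assms] by simp
  then show "h -` U \<inter> space m \<in> sets m" using open_sets by (simp add: space_m Int_def conj_commute)
qed

interpretation pm: prob_space m by (rule prob)

lemma Cfun_integrable: "u \<in> Cfun T \<Longrightarrow> integrable m u"
  by (intro pm.integrable_const_bound[where B="supnorm T u"] AE_I2 cont_borel Cfun_cont)
     (auto simp: space_m supnorm_ge cpt)

definition I :: "('a \<Rightarrow> complex) \<Rightarrow> complex" where
  "I u = (if u \<in> Cfun T then integral\<^sup>L m u else 0)"

lemma I_Meas: "I \<in> Meas T"
  unfolding Meas_def
proof (intro CollectI conjI ballI allI impI)
  fix u v assume "u \<in> Cfun T" "v \<in> Cfun T"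
  then show "I (\<lambda>x. u x + v x) = I u + I v" by (simp add: I_def Cfun_add Cfun_integrable)
next
  fix c u assume "u \<in> Cfun T"
  then show "I (\<lambda>x. c * u x) = c * I u" by (simp add: I_def Cfun_cmult Cfun_integrable)
next
  show "\<exists>B. \<forall>u\<in>Cfun T. cmod (I u) \<le> B * supnorm T u"
  proof (intro exI[of _ 1] ballI)
    fix u assume u: "u \<in> Cfun T"
    have "cmod (I u) \<le> integral\<^sup>L m (\<lambda>x. cmod (u x))" using u by (simp add: I_def integral_norm_bound)
    also have "\<dots> \<le> integral\<^sup>L m (\<lambda>x. supnorm T u)"
      using u by (intro integral_mono Cfun_integrable integrable_norm) (auto simp: space_m supnorm_ge cpt)
    also have "\<dots> = supnorm T u" using pm.prob_space by (simp add: lebesgue_integral_const)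
    finally show "cmod (I u) \<le> 1 * supnorm T u" by simp
  qed
qed (simp add: I_def)

lemma I_apply: "u \<in> Cfun T \<Longrightarrow> I u = integral\<^sup>L m u" by (simp add: I_def)

definition one :: "'a \<Rightarrow> complex" where "one = (\<lambda>x. if x \<in> topspace T then 1 else 0)"

lemma one_Cfun: "one \<in> Cfun T" unfolding one_def by (rule Cfun_const)

lemma I_one: "I one = 1"
proof -
  have "integral\<^sup>L m one = integral\<^sup>L m (\<lambda>x. 1::complex)"
    by (intro Bochner_Integration.integral_cong) (auto simp: one_def space_m)
  then show ?thesis using one_Cfun pm.prob_space by (simp add: I_apply lebesgue_integral_const)
qed

lemma I_const: "I (\<lambda>x. if x \<in> topspace T then c else 0) = c"
proof -
  have "(\<lambda>x. if x \<in> topspace T then c else 0) = (\<lambda>x. c * one x)" by (auto simp: one_def)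
  then show ?thesis using Meas_cmult[OF I_Meas one_Cfun] I_one by simp
qed

lemma distr_left: assumes x: "x \<in> carrier G" shows "distr m m (\<lambda>s. x \<otimes> s) = m"
proof -
  have meas: "(\<lambda>s. x \<otimes> s) \<in> measurable m m" using x by (intro cont_meas continuous_intros)
  show ?thesis
  proof (rule measure_eqI)
    fix A assume A: "A \<in> sets (distr m m (\<lambda>s. x \<otimes> s))"
    then have A': "A \<in> sets m" by simp
    have sub: "A \<subseteq> carrier G" using sets.sets_into_space[OF A'] by (simp add: space_m top)
    have "(\<lambda>s. x \<otimes> s) -` A \<inter> space m = (\<lambda>s. inv x \<otimes> s) ` A"
    proof
      show "(\<lambda>s. x \<otimes> s) -` A \<inter> space m \<subseteq> (\<lambda>s. inv x \<otimes> s) ` A"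
      proof
        fix s assume s: "s \<in> (\<lambda>s. x \<otimes> s) -` A \<inter> space m"
        then have "s = inv x \<otimes> (x \<otimes> s)" using x by (simp add: space_m top)
        then show "s \<in> (\<lambda>s. inv x \<otimes> s) ` A" using s by blast
      qed
      show "(\<lambda>s. inv x \<otimes> s) ` A \<subseteq> (\<lambda>s. x \<otimes> s) -` A \<inter> space m"
        using sub x by (auto simp: space_m top)
    qed
    then show "emeasure (distr m m (\<lambda>s. x \<otimes> s)) A = emeasure m A"
      using emeasure_distr[OF meas A'] linv[OF inv_closed[OF x] A'] by simp
  qed simp
qed

lemma LI: assumes x: "x \<in> carrier G" and u: "u \<in> Cfun T"
  shows "I (\<lambda>s. if s \<in> topspace T then u (x \<otimes> s) else 0) = I u"
proof -
  have c: "(\<lambda>s. if s \<in> topspace T then u (x \<otimes> s) else 0) \<in> Cfun T"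
    using x u by (intro Cfun_compT continuous_intros) auto
  have "integral\<^sup>L m (\<lambda>s. if s \<in> topspace T then u (x \<otimes> s) else 0) = integral\<^sup>L m (\<lambda>s. u (x \<otimes> s))"
    by (intro Bochner_Integration.integral_cong) (auto simp: space_m)
  also have "\<dots> = integral\<^sup>L (distr m m (\<lambda>s. x \<otimes> s)) u"
    using x u by (intro integral_distr[symmetric] cont_meas cont_borel Cfun_cont continuous_intros) auto
  also have "\<dots> = integral\<^sup>L m u" using distr_left[OF x] by simp
  finally show ?thesis using c u by (simp add: I_apply)
qed

lemma Meas_comp:
  assumes \<phi>: "\<phi> \<in> Meas T" and h: "continuous_map T T h"
  shows "(\<lambda>u. if u \<in> Cfun T then \<phi> (\<lambda>s. if s \<in> topspace T then u (h s) else 0) else 0) \<in> Meas T"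
proof -
  obtain B where B: "B \<ge> 0" "\<And>u. u \<in> Cfun T \<Longrightarrow> cmod (\<phi> u) \<le> B * supnorm T u"
    using Meas_bound[OF \<phi> cpt ne] by blast
  have hC: "(\<lambda>s. if s \<in> topspace T then u (h s) else 0) \<in> Cfun T" if "u \<in> Cfun T" for u
    using Cfun_comp[OF that h] .
  show ?thesis unfolding Meas_def
  proof (intro CollectI conjI ballI allI impI)
    fix u v assume u: "u \<in> Cfun T" and v: "v \<in> Cfun T"
    have "(\<lambda>s. if s \<in> topspace T then u (h s) + v (h s) else 0) = (\<lambda>s. (if s \<in> topspace T then u (h s) else 0) + (if s \<in> topspace T then v (h s) else 0))"
      by auto
    then show "(if (\<lambda>x. u x + v x) \<in> Cfun T then \<phi> (\<lambda>s. if s \<in> topspace T then u (h s) + v (h s) else 0) else 0) =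
         (if u \<in> Cfun T then \<phi> (\<lambda>s. if s \<in> topspace T then u (h s) else 0) else 0) +
         (if v \<in> Cfun T then \<phi> (\<lambda>s. if s \<in> topspace T then v (h s) else 0) else 0)"
      using Cfun_add[OF u v] u v Meas_add[OF \<phi> hC[OF u] hC[OF v]] by simp
  next
    fix c u assume u: "u \<in> Cfun T"
    have "(\<lambda>s. if s \<in> topspace T then c * u (h s) else 0) = (\<lambda>s. c * (if s \<in> topspace T then u (h s) else 0))"
      by auto
    then show "(if (\<lambda>x. c * u x) \<in> Cfun T then \<phi> (\<lambda>s. if s \<in> topspace T then c * u (h s) else 0) else 0) =
         c * (if u \<in> Cfun T then \<phi> (\<lambda>s. if s \<in> topspace T then u (h s) else 0) else 0)"
      using Cfun_cmult[OF u] u Meas_cmult[OF \<phi> hC[OF u]] by simp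
  next
    show "\<exists>B. \<forall>u\<in>Cfun T. cmod (if u \<in> Cfun T then \<phi> (\<lambda>s. if s \<in> topspace T then u (h s) else 0) else 0) \<le> B * supnorm T u"
    proof (intro exI ballI)
      fix u assume u: "u \<in> Cfun T"
      have "cmod (\<phi> (\<lambda>s. if s \<in> topspace T then u (h s) else 0)) \<le> B * supnorm T (\<lambda>s. if s \<in> topspace T then u (h s) else 0)"
        using B(2)[OF hC[OF u]] .
      also have "\<dots> \<le> B * supnorm T u"
      proof (rule mult_left_mono[OF _ B(1)], rule supnorm_le[OF ne])
        fix s assume s: "s \<in> topspace T"
        then have "h s \<in> topspace T" using h by (auto simp: continuous_map_def)
        then show "cmod (if s \<in> topspace T then u (h s) else 0) \<le> supnorm T u"
          using supnorm_ge[OF cpt u] s by auto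
      qed
      finally show "cmod (if u \<in> Cfun T then \<phi> (\<lambda>s. if s \<in> topspace T then u (h s) else 0) else 0) \<le> B * supnorm T u"
        using u by simp
    qed
  qed simp
qed

definition \<rho> :: "('a \<Rightarrow> complex) \<Rightarrow> complex" where
  "\<rho> = (\<lambda>u. if u \<in> Cfun T then I (\<lambda>s. if s \<in> topspace T then u (inv s) else 0) else 0)"

lemma \<rho>_Meas: "\<rho> \<in> Meas T"
  unfolding \<rho>_def by (intro Meas_comp I_Meas continuous_intros)

lemma \<rho>_right:
  assumes z: "z \<in> carrier G" and u: "u \<in> Cfun T"
  shows "\<rho> (\<lambda>s. if s \<in> topspace T then u (s \<otimes> z) else 0) = \<rho> u"
proof -
  define w where "w = (\<lambda>t. if t \<in> topspace T then u (inv t) else 0)"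
  have wC: "w \<in> Cfun T" unfolding w_def using u by (intro Cfun_compT continuous_intros)
  have c: "(\<lambda>s. if s \<in> topspace T then u (s \<otimes> z) else 0) \<in> Cfun T"
    using z u by (intro Cfun_compT continuous_intros) auto
  have "(\<lambda>s. if s \<in> topspace T then (if inv s \<in> topspace T then u (inv s \<otimes> z) else 0) else 0)
      = (\<lambda>s. if s \<in> topspace T then w (inv z \<otimes> s) else 0)"
    using z by (intro ext) (auto simp: w_def top inv_mult_group)
  then have "\<rho> (\<lambda>s. if s \<in> topspace T then u (s \<otimes> z) else 0) = I (\<lambda>s. if s \<in> topspace T then w (inv z \<otimes> s) else 0)"
    using c by (simp add: \<rho>_def)
  also have "\<dots> = I w" using LI[OF inv_closed[OF z] wC] .
  also have "\<dots> = \<rho> u" using u by (simp add: \<rho>_def w_def)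
  finally show ?thesis .
qed

lemma I_eq_\<rho>: "I = \<rho>"
proof
  fix u show "I u = \<rho> u"
  proof (cases "u \<in> Cfun T")
    case False then show ?thesis by (simp add: I_def \<rho>_def)
  next
    case u: True
    have F: "continuous_map (prod_topology T T) euclidean (\<lambda>p. u (snd p \<otimes> fst p))"
      using u by (intro Cfun_cont_comp continuous_intros)
    have "I (\<lambda>x. if x \<in> topspace T then \<rho> (\<lambda>y. if y \<in> topspace T then u (y \<otimes> x) else 0) else 0)
        = \<rho> (\<lambda>y. if y \<in> topspace T then I (\<lambda>x. if x \<in> topspace T then u (y \<otimes> x) else 0) else 0)"
      using fubini_meas[OF cpt haus ne cpt ne F I_Meas \<rho>_Meas] unfolding fst_conv snd_conv .
    moreover have "(\<lambda>x. if x \<in> topspace T then \<rho> (\<lambda>y. if y \<in> topspace T then u (y \<otimes> x) else 0) else 0)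
        = (\<lambda>x. if x \<in> topspace T then \<rho> u else 0)"
      by (intro ext) (simp add: \<rho>_right[OF _ u] top[symmetric] cong: if_cong)
    moreover have "(\<lambda>y. if y \<in> topspace T then I (\<lambda>x. if x \<in> topspace T then u (y \<otimes> x) else 0) else 0)
        = (\<lambda>y. if y \<in> topspace T then I u else 0)"
      by (intro ext) (simp add: LI[OF _ u] top[symmetric] cong: if_cong)
    moreover have "\<rho> (\<lambda>y. if y \<in> topspace T then c else 0) = c" for c
    proof -
      have "(\<lambda>s. if s \<in> topspace T then (if inv s \<in> topspace T then c else 0) else 0) = (\<lambda>s. if s \<in> topspace T then c else 0)"
        by (auto simp: top)
      then show ?thesis using Cfun_const[of T c] by (simp add: \<rho>_def I_const)
    qed
    ultimately show ?thesis by (simp add: I_const)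
  qed
qed

lemma RI: assumes z: "z \<in> carrier G" and u: "u \<in> Cfun T"
  shows "I (\<lambda>s. if s \<in> topspace T then u (s \<otimes> z) else 0) = I u"
  using \<rho>_right[OF z u] by (simp add: I_eq_\<rho>)

lemma CI: assumes y: "y \<in> carrier G" and u: "u \<in> Cfun T"
  shows "I (\<lambda>s. if s \<in> topspace T then u (y \<otimes> s \<otimes> inv y) else 0) = I u"
proof -
  define w where "w = (\<lambda>t. if t \<in> topspace T then u (t \<otimes> inv y) else 0)"
  have wC: "w \<in> Cfun T" unfolding w_def using u y by (intro Cfun_compT continuous_intros) auto
  have "(\<lambda>s. if s \<in> topspace T then u (y \<otimes> s \<otimes> inv y) else 0) = (\<lambda>s. if s \<in> topspace T then w (y \<otimes> s) else 0)"
    using y by (intro ext) (auto simp: w_def top)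
  then have "I (\<lambda>s. if s \<in> topspace T then u (y \<otimes> s \<otimes> inv y) else 0) = I w" using LI[OF y wC] by simp
  also have "\<dots> = I u" unfolding w_def using RI[OF inv_closed[OF y] u] .
  finally show ?thesis .
qed

lemma I_cinv: "cinv I" unfolding cinv_def using CI by blast

lemma I_Re: assumes "u \<in> Cfun T" shows "Re (I u) = integral\<^sup>L m (\<lambda>x. Re (u x))"
  using assms Cfun_integrable by (simp add: I_apply)

lemma I_Im: assumes "u \<in> Cfun T" shows "Im (I u) = integral\<^sup>L m (\<lambda>x. Im (u x))"
  using assms Cfun_integrable by (simp add: I_apply)

lemma I_mono_Re:
  assumes u: "u \<in> Cfun T" and v: "v \<in> Cfun T" and le: "\<And>x. x \<in> topspace T \<Longrightarrow> Re (u x) \<le> Re (v x)"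
  shows "Re (I u) \<le> Re (I v)"
proof -
  have "Re (I v) - Re (I u) = Re (I (\<lambda>x. v x - u x))" using Meas_diff[OF I_Meas v u] by simp
  also have "\<dots> = integral\<^sup>L m (\<lambda>x. Re (v x - u x))" by (rule I_Re[OF Cfun_diff[OF v u]])
  also have "\<dots> \<ge> 0" using le by (intro Bochner_Integration.integral_nonneg) (auto simp: space_m)
  finally show ?thesis by simp
qed

lemma I_real_nonneg:
  assumes u: "u \<in> Cfun T" and r: "\<And>x. x \<in> topspace T \<Longrightarrow> Im (u x) = 0 \<and> Re (u x) \<ge> 0"
  shows "Im (I u) = 0 \<and> Re (I u) \<ge> 0"
proof
  have "integral\<^sup>L m (\<lambda>x. Im (u x)) = integral\<^sup>L m (\<lambda>x. 0)"
    using r by (intro Bochner_Integration.integral_cong) (auto simp: space_m)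
  then show "Im (I u) = 0" by (simp add: I_Im[OF u])
  show "Re (I u) \<ge> 0" unfolding I_Re[OF u] using r by (intro Bochner_Integration.integral_nonneg) (auto simp: space_m)
qed

end

context hgrp
begin

interpretation pm: prob_space m by (rule prob)

lemma L1_Meas:
  assumes "\<phi> \<in> L1 T m"
  shows "\<phi> \<in> Meas T"
proof -
  obtain f where f: "integrable m f" and \<phi>: "\<phi> = (\<lambda>u. if u \<in> Cfun T then (\<integral>x. u x * f x \<partial>m) else 0)"
    using assms by (auto simp: L1_def)
  have int: "integrable m (\<lambda>x. u x * f x)" if u: "u \<in> Cfun T" for u
  proof (rule Bochner_Integration.integrable_bound[OF integrable_mult_right[OF f, of "of_real (supnorm T u)"]])
    show "(\<lambda>x. u x * f x) \<in> borel_measurable m"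
      using u f by (intro borel_measurable_times cont_borel Cfun_cont borel_measurable_integrable)
    show "AE x in m. norm (u x * f x) \<le> norm (complex_of_real (supnorm T u) * f x)"
    proof (rule AE_I2)
      fix x assume "x \<in> space m"
      then have "cmod (u x) \<le> supnorm T u" using supnorm_ge[OF cpt u] by (simp add: space_m)
      moreover have "0 \<le> supnorm T u" using supnorm_nonneg[OF cpt u ne] .
      ultimately show "norm (u x * f x) \<le> norm (complex_of_real (supnorm T u) * f x)"
        by (simp add: norm_mult mult_right_mono)
    qed
  qed
  show ?thesis unfolding Meas_def
  proof (intro CollectI conjI ballI allI impI)
    fix u v assume u: "u \<in> Cfun T" and v: "v \<in> Cfun T"
    show "\<phi> (\<lambda>x. u x + v x) = \<phi> u + \<phi> v"
      using int[OF u] int[OF v] Cfun_add[OF u v] u v by (simp add: \<phi> distrib_right)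
  next
    fix c u assume u: "u \<in> Cfun T"
    show "\<phi> (\<lambda>x. c * u x) = c * \<phi> u"
      using int[OF u] Cfun_cmult[OF u] u by (simp add: \<phi> mult.assoc)
  next
    show "\<exists>B. \<forall>u\<in>Cfun T. cmod (\<phi> u) \<le> B * supnorm T u"
    proof (intro exI ballI)
      fix u assume u: "u \<in> Cfun T"
      have "cmod (\<phi> u) \<le> (\<integral>x. cmod (u x * f x) \<partial>m)" using u by (simp add: \<phi>)
      also have "\<dots> \<le> (\<integral>x. supnorm T u * cmod (f x) \<partial>m)"
      proof (rule Bochner_Integration.integral_mono)
        show "integrable m (\<lambda>x. cmod (u x * f x))" using int[OF u] by simp
        show "integrable m (\<lambda>x. supnorm T u * cmod (f x))" using f by simp
        fix x assume "x \<in> space m"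
        then have "cmod (u x) \<le> supnorm T u" using supnorm_ge[OF cpt u] by (simp add: space_m)
        then show "cmod (u x * f x) \<le> supnorm T u * cmod (f x)" by (simp add: norm_mult mult_right_mono)
      qed
      also have "\<dots> = (\<integral>x. cmod (f x) \<partial>m) * supnorm T u" by simp
      finally show "cmod (\<phi> u) \<le> (\<integral>x. cmod (f x) \<partial>m) * supnorm T u" .
    qed
  qed (simp add: \<phi>)
qed

lemma conj_nbhd:
  assumes V: "openin T V" "\<one> \<in> V"
  obtains W where "openin T W" "\<one> \<in> W" "\<And>x y. x \<in> W \<Longrightarrow> y \<in> carrier G \<Longrightarrow> y \<otimes> x \<otimes> inv y \<in> V"
proof -
  have c: "continuous_map T2 T (\<lambda>p. snd p \<otimes> fst p \<otimes> inv (snd p))"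
    by (intro continuous_intros)
  have op: "openin T2 {p \<in> topspace T2. snd p \<otimes> fst p \<otimes> inv (snd p) \<in> V}"
    by (rule openin_continuous_map_preimage[OF c V(1)])
  have sub: "{\<one>} \<times> topspace T \<subseteq> {p \<in> topspace T2. snd p \<otimes> fst p \<otimes> inv (snd p) \<in> V}"
    using V by (auto simp: top)
  have "compactin T (topspace T)" using cpt by (simp add: compact_space_def)
  then obtain U V' where UV: "openin T U" "openin T V'" "\<one> \<in> U" "topspace T \<subseteq> V'"
      "U \<times> V' \<subseteq> {p \<in> topspace T2. snd p \<otimes> fst p \<otimes> inv (snd p) \<in> V}"
    using tube_lemma_right[OF op _ _ sub] by (auto simp: top)
  show ?thesis
  proof (rule that[OF UV(1,3)])
    fix x y assume "x \<in> U" "y \<in> carrier G"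
    then have "(x,y) \<in> U \<times> V'" using UV(4) by (auto simp: top)
    then show "y \<otimes> x \<otimes> inv y \<in> V" using UV(5) by auto
  qed
qed

definition bump :: "('a \<Rightarrow> complex) \<Rightarrow> 'a set \<Rightarrow> bool" where
  "bump f V \<longleftrightarrow> f \<in> Cfun T \<and> (\<forall>x\<in>topspace T. Im (f x) = 0 \<and> Re (f x) \<ge> 0) \<and>
     (\<forall>x\<in>topspace T. f x \<noteq> 0 \<longrightarrow> x \<in> V) \<and> I f = 1 \<and>
     (\<forall>y\<in>carrier G. \<forall>x\<in>topspace T. f (y \<otimes> x \<otimes> inv y) = f x)"

lemma bump_exists:
  assumes V: "openin T V" "\<one> \<in> V"
  shows "\<exists>f. bump f V"
proof -
  obtain W where W: "openin T W" "\<one> \<in> W" "\<And>x y. x \<in> W \<Longrightarrow> y \<in> carrier G \<Longrightarrow> y \<otimes> x \<otimes> inv y \<in> V"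
    using conj_nbhd[OF V] by blast
  have nT: "normal_space T" using cpt haus by (simp add: compact_Hausdorff_or_regular_imp_normal_space)
  have t1: "t1_space T" using haus by (rule Hausdorff_imp_t1_space)
  have "closedin T (topspace T - W)" using W by blast
  moreover have "closedin T {\<one>}" using t1 by (simp add: t1_space_closedin_singleton top)
  moreover have "disjnt (topspace T - W) {\<one>}" using W by auto
  ultimately obtain g0 where g0: "continuous_map T (top_of_set {0..1::real}) g0" "g0 ` (topspace T - W) \<subseteq> {0}" "g0 ` {\<one>} \<subseteq> {1}"
    using Urysohn_lemma[OF nT, of "topspace T - W" "{\<one>}" 0 1] by auto
  have g0c: "continuous_map T euclideanreal g0" using g0(1) continuous_map_in_subtopology by blast
  have g0r: "0 \<le> g0 x" "g0 x \<le> 1" if "x \<in> topspace T" for x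
    using g0(1) that by (auto simp: continuous_map_def)
  have g0W: "g0 x = 0" if "x \<in> topspace T" "x \<notin> W" for x using g0(2) that by blast
  have g01: "g0 \<one> = 1" using g0(3) by simp
  define gc where "gc = (\<lambda>x. if x \<in> topspace T then complex_of_real (g0 x) else 0)"
  have gcC: "gc \<in> Cfun T" unfolding gc_def by (intro Cfun_ext0 continuous_map_of_real_comp g0c)
  define U where "U = {x \<in> topspace T. g0 x \<in> {1/2<..}}"
  have U: "openin T U" "\<one> \<in> U"
    unfolding U_def using openin_continuous_map_preimage[OF g0c, of "{1/2<..}"] g01 by (auto simp: top)
  define Ux where "Ux x = {s \<in> topspace T. inv x \<otimes> s \<in> U}" for x
  have "openin T (Ux x) \<and> x \<in> Ux x" if x: "x \<in> topspace T" for x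
  proof
    have "continuous_map T T (\<lambda>s. inv x \<otimes> s)" using x by (intro continuous_intros) (auto simp: top)
    then show "openin T (Ux x)" unfolding Ux_def by (rule openin_continuous_map_preimage[OF _ U(1)])
    show "x \<in> Ux x" using x U(2) by (simp add: Ux_def top)
  qed
  then obtain D where D: "finite D" "D \<subseteq> topspace T" "topspace T \<subseteq> (\<Union>x\<in>D. Ux x)"
    using compact_point_cover[OF cpt] by metis
  define tr where "tr x = (\<lambda>s. if s \<in> topspace T then gc (inv x \<otimes> s) else 0)" for x
  have trC: "tr x \<in> Cfun T" if "x \<in> D" for x
    unfolding tr_def using gcC that D(2) by (intro Cfun_compT continuous_intros) (auto simp: top)
  have Itr: "I (tr x) = I gc" if "x \<in> D" for x
    unfolding tr_def using LI[OF _ gcC] that D(2) by (auto simp: top)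
  have "Re (I (\<lambda>s. if s \<in> topspace T then 1/2 else 0)) \<le> Re (I (\<lambda>s. \<Sum>x\<in>D. tr x s))"
  proof (rule I_mono_Re[OF Cfun_const Cfun_sum[OF D(1) trC]])
    fix s assume s: "s \<in> topspace T"
    obtain x where x: "x \<in> D" "s \<in> Ux x" using D s by blast
    have ge: "Re (tr x' s) \<ge> 0" if "x' \<in> D" for x'
      using s g0r[of "inv x' \<otimes> s"] that D(2) by (auto simp: tr_def gc_def top)
    have "1/2 \<le> Re (tr x s)" using x s by (auto simp: tr_def gc_def Ux_def U_def top)
    also have "\<dots> \<le> (\<Sum>x'\<in>D. Re (tr x' s))" using D(1) x(1) ge by (intro member_le_sum) auto
    finally show "Re (if s \<in> topspace T then 1/2 else 0) \<le> Re (\<Sum>x\<in>D. tr x s)" using s by simp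
  qed
  moreover have "I (\<lambda>s. \<Sum>x\<in>D. tr x s) = of_nat (card D) * I gc"
    using Meas_sum[OF I_Meas D(1) trC] Itr by simp
  ultimately have half: "1/2 \<le> real (card D) * Re (I gc)" by (simp add: I_const)
  have ge0: "Re (I gc) \<ge> 0" and cim: "Im (I gc) = 0"
    using I_real_nonneg[OF gcC] g0r by (auto simp: gc_def)
  have "Re (I gc) \<noteq> 0"
  proof
    assume "Re (I gc) = 0" then show False using half by simp
  qed
  then have cpos: "Re (I gc) > 0" using ge0 by linarith
  \<comment> \<open>averaging over conjugation\<close>
  have Fc: "continuous_map T2 euclidean (\<lambda>p. gc (snd p \<otimes> fst p \<otimes> inv (snd p)))"
    using gcC by (intro Cfun_cont_comp continuous_intros)
  define f0 where "f0 = (\<lambda>x. if x \<in> topspace T then I (\<lambda>y. if y \<in> topspace T then gc (y \<otimes> x \<otimes> inv y) else 0) else 0)"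
  have f0C: "f0 \<in> Cfun T"
    using param_cont[OF cpt ne Fc I_Meas] unfolding f0_def fst_conv snd_conv .
  have innerC: "(\<lambda>y. if y \<in> topspace T then gc (y \<otimes> x \<otimes> inv y) else 0) \<in> Cfun T" if "x \<in> topspace T" for x
    using gcC that by (intro Cfun_compT continuous_intros) (auto simp: top)
  have f0r: "Im (f0 x) = 0 \<and> Re (f0 x) \<ge> 0" if x: "x \<in> topspace T" for x
    using I_real_nonneg[OF innerC[OF x]] x g0r by (auto simp: f0_def gc_def top)
  have f0V: "x \<in> V" if x: "x \<in> topspace T" and nz: "f0 x \<noteq> 0" for x
  proof (rule ccontr)
    assume xV: "x \<notin> V"
    have "(\<lambda>y. if y \<in> topspace T then gc (y \<otimes> x \<otimes> inv y) else 0) = (\<lambda>y. 0)"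
    proof
      fix y show "(if y \<in> topspace T then gc (y \<otimes> x \<otimes> inv y) else 0) = 0"
      proof (cases "y \<in> topspace T")
        case True
        have "y \<otimes> x \<otimes> inv y \<notin> W"
        proof
          assume "y \<otimes> x \<otimes> inv y \<in> W"
          moreover have "inv y \<in> carrier G" using True by (simp add: top)
          ultimately have "inv y \<otimes> (y \<otimes> x \<otimes> inv y) \<otimes> inv (inv y) \<in> V"
            by (rule W(3))
          then show False using xV True x by (simp add: top m_assoc)
        qed
        then show ?thesis using True x g0W[of "y \<otimes> x \<otimes> inv y"] by (auto simp: gc_def top)
      qed simp
    qed
    then have "f0 x = 0" using x by (simp add: f0_def Meas_zero[OF I_Meas])
    then show False using nz by simp
  qed
  have f0cent: "f0 (z \<otimes> x \<otimes> inv z) = f0 x" if z: "z \<in> carrier G" and x: "x \<in> topspace T" for z x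
  proof -
    define k where "k = (\<lambda>y. if y \<in> topspace T then gc (y \<otimes> x \<otimes> inv y) else 0)"
    have "(\<lambda>y. if y \<in> topspace T then gc (y \<otimes> (z \<otimes> x \<otimes> inv z) \<otimes> inv y) else 0) = (\<lambda>y. if y \<in> topspace T then k (y \<otimes> z) else 0)"
      using z x by (intro ext) (auto simp: k_def top inv_mult_group m_assoc)
    then have "f0 (z \<otimes> x \<otimes> inv z) = I (\<lambda>y. if y \<in> topspace T then k (y \<otimes> z) else 0)"
      using z x by (simp add: f0_def top)
    also have "\<dots> = I k"
    proof -
      have kC: "k \<in> Cfun T" unfolding k_def by (rule innerC[OF x])
      show ?thesis by (rule RI[OF z kC])
    qed
    also have "\<dots> = f0 x" using x by (simp add: k_def f0_def)
    finally show ?thesis .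
  qed
  have If0: "I f0 = I gc"
  proof -
    have "I f0 = I (\<lambda>y. if y \<in> topspace T then I (\<lambda>x. if x \<in> topspace T then gc (y \<otimes> x \<otimes> inv y) else 0) else 0)"
      using fubini_meas[OF cpt haus ne cpt ne Fc I_Meas I_Meas] unfolding fst_conv snd_conv f0_def .
    also have "(\<lambda>y. if y \<in> topspace T then I (\<lambda>x. if x \<in> topspace T then gc (y \<otimes> x \<otimes> inv y) else 0) else 0)
        = (\<lambda>y. if y \<in> topspace T then I gc else 0)"
      by (intro ext) (simp add: CI[OF _ gcC] top[symmetric] cong: if_cong)
    finally show ?thesis by (simp add: I_const)
  qed
  define r where "r = Re (I gc)"
  have Igc: "I gc = complex_of_real r" using cim by (simp add: r_def complex_eq_iff)
  define f where "f = (\<lambda>x. complex_of_real (1 / r) * f0 x)"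
  have "bump f V" unfolding bump_def
  proof (intro conjI ballI impI)
    show "f \<in> Cfun T" unfolding f_def by (rule Cfun_cmult[OF f0C])
    fix x assume x: "x \<in> topspace T"
    show "Im (f x) = 0" using f0r[OF x] by (simp add: f_def)
    show "Re (f x) \<ge> 0" using f0r[OF x] cpos by (simp add: f_def r_def)
  next
    fix x assume x: "x \<in> topspace T" and fx: "f x \<noteq> 0"
    have "f0 x \<noteq> 0" using fx unfolding f_def by auto
    then show "x \<in> V" using f0V[OF x] by blast
  next
    have "I f = complex_of_real (1 / r) * I f0" unfolding f_def by (rule Meas_cmult[OF I_Meas f0C])
    also have "\<dots> = complex_of_real (1 / r) * complex_of_real r" using If0 Igc by simp
    also have "\<dots> = 1" using cpos unfolding r_def[symmetric] by (simp flip: of_real_mult)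
    finally show "I f = 1" .
  next
    fix y x assume y: "y \<in> carrier G" and x: "x \<in> topspace T"
    have "f0 (y \<otimes> x \<otimes> inv y) = f0 x" by (rule f0cent[OF y x])
    then show "f (y \<otimes> x \<otimes> inv y) = f x" unfolding f_def by simp
  qed
  then show ?thesis by blast
qed

end

context hgrp
begin

interpretation pm: prob_space m by (rule prob)

definition phi :: "('a \<Rightarrow> complex) \<Rightarrow> (('a \<Rightarrow> complex) \<Rightarrow> complex)" where
  "phi f = (\<lambda>u. if u \<in> Cfun T then I (\<lambda>x. u x * f x) else 0)"

lemma phi_L1: assumes f: "f \<in> Cfun T" shows "phi f \<in> L1 T m"
proof -
  have "phi f = (\<lambda>u. if u \<in> Cfun T then (\<integral>x. u x * f x \<partial>m) else 0)"
    using f by (auto simp: phi_def I_apply Cfun_mult)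
  then show ?thesis unfolding L1_def using Cfun_integrable[OF f] by blast
qed

lemma phi_Meas: "f \<in> Cfun T \<Longrightarrow> phi f \<in> Meas T"
  using L1_Meas phi_L1 by blast

lemma phi_ext:
  assumes f: "f \<in> Cfun T" and a: "(\<lambda>t. if t \<in> topspace T then a t else 0) \<in> Cfun T"
  shows "phi f (\<lambda>t. if t \<in> topspace T then a t else 0) = I (\<lambda>t. if t \<in> topspace T then a t * f t else 0)"
proof -
  have "(\<lambda>x. (if x \<in> topspace T then a x else 0) * f x) = (\<lambda>t. if t \<in> topspace T then a t * f t else 0)"
    by auto
  then show ?thesis using a by (simp add: phi_def)
qed

lemma bumpD: assumes "bump f V"
  shows "f \<in> Cfun T" "\<And>x. x \<in> topspace T \<Longrightarrow> Im (f x) = 0" "\<And>x. x \<in> topspace T \<Longrightarrow> Re (f x) \<ge> 0"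
    "\<And>x. x \<in> topspace T \<Longrightarrow> f x \<noteq> 0 \<Longrightarrow> x \<in> V" "I f = 1"
    "\<And>y x. y \<in> carrier G \<Longrightarrow> x \<in> topspace T \<Longrightarrow> f (y \<otimes> x \<otimes> inv y) = f x"
  using assms by (auto simp: bump_def)

lemma Gfun_eq:
  assumes f: "f \<in> Cfun T" and u: "u \<in> Cfun T" and s: "s \<in> topspace T"
  shows "phi f (\<lambda>t. if t \<in> topspace T then u (s \<otimes> t) else 0) = I (\<lambda>t. if t \<in> topspace T then u (s \<otimes> t) * f t else 0)"
  using u s by (intro phi_ext f Cfun_compT continuous_intros) (auto simp: top)

lemma psi_L1:
  assumes \<mu>: "\<mu> \<in> Meas T" and f: "f \<in> Cfun T"
  shows "conv G T \<mu> (phi f) \<in> L1 T m"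
proof -
  have Fh: "continuous_map T2 euclidean (\<lambda>p. f (inv (snd p) \<otimes> fst p))"
    using f by (intro Cfun_cont_comp continuous_intros)
  define h where "h = (\<lambda>x. if x \<in> topspace T then \<mu> (\<lambda>s. if s \<in> topspace T then f (inv s \<otimes> x) else 0) else 0)"
  have hC: "h \<in> Cfun T" using param_cont[OF cpt ne Fh \<mu>] unfolding h_def fst_conv snd_conv .
  have "conv G T \<mu> (phi f) = (\<lambda>u. if u \<in> Cfun T then (\<integral>x. u x * h x \<partial>m) else 0)"
  proof
    fix u show "conv G T \<mu> (phi f) u = (if u \<in> Cfun T then (\<integral>x. u x * h x \<partial>m) else 0)"
    proof (cases "u \<in> Cfun T")
      case False then show ?thesis by (simp add: conv_def)
    next
      case u: True
      have step1: "(\<lambda>s. if s \<in> topspace T then phi f (\<lambda>t. if t \<in> topspace T then u (s \<otimes> t) else 0) else 0)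
          = (\<lambda>s. if s \<in> topspace T then I (\<lambda>x. if x \<in> topspace T then u x * f (inv s \<otimes> x) else 0) else 0)"
      proof
        fix s show "(if s \<in> topspace T then phi f (\<lambda>t. if t \<in> topspace T then u (s \<otimes> t) else 0) else 0)
          = (if s \<in> topspace T then I (\<lambda>x. if x \<in> topspace T then u x * f (inv s \<otimes> x) else 0) else 0)"
        proof (cases "s \<in> topspace T")
          case s: True
          define v where "v = (\<lambda>x. if x \<in> topspace T then u x * f (inv s \<otimes> x) else 0)"
          have vC: "v \<in> Cfun T" unfolding v_def
            using u f s by (intro Cfun_ext0 continuous_map_cmult Cfun_cont Cfun_cont_comp continuous_intros) (auto simp: top)
          have "(\<lambda>t. if t \<in> topspace T then u (s \<otimes> t) * f t else 0) = (\<lambda>t. if t \<in> topspace T then v (s \<otimes> t) else 0)"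
            using s by (intro ext) (auto simp: v_def top)
          then have "phi f (\<lambda>t. if t \<in> topspace T then u (s \<otimes> t) else 0) = I v"
            using Gfun_eq[OF f u s] LI[OF _ vC] s by (simp add: top)
          then show ?thesis using s by (simp add: v_def)
        qed simp
      qed
      have F2: "continuous_map T2 euclidean (\<lambda>p. u (snd p) * f (inv (fst p) \<otimes> snd p))"
        using u f by (intro continuous_map_cmult Cfun_cont_comp continuous_intros)
      have step2: "\<mu> (\<lambda>s. if s \<in> topspace T then I (\<lambda>x. if x \<in> topspace T then u x * f (inv s \<otimes> x) else 0) else 0)
          = I (\<lambda>x. if x \<in> topspace T then \<mu> (\<lambda>s. if s \<in> topspace T then u x * f (inv s \<otimes> x) else 0) else 0)"
        using fubini_meas[OF cpt haus ne cpt ne F2 \<mu> I_Meas] unfolding fst_conv snd_conv .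
      have step3: "(\<lambda>x. if x \<in> topspace T then \<mu> (\<lambda>s. if s \<in> topspace T then u x * f (inv s \<otimes> x) else 0) else 0)
          = (\<lambda>x. u x * h x)"
      proof
        fix x show "(if x \<in> topspace T then \<mu> (\<lambda>s. if s \<in> topspace T then u x * f (inv s \<otimes> x) else 0) else 0) = u x * h x"
        proof (cases "x \<in> topspace T")
          case x: True
          have c: "(\<lambda>s. if s \<in> topspace T then f (inv s \<otimes> x) else 0) \<in> Cfun T"
            using f x by (intro Cfun_compT continuous_intros) (auto simp: top)
          have "(\<lambda>s. if s \<in> topspace T then u x * f (inv s \<otimes> x) else 0) = (\<lambda>s. u x * (if s \<in> topspace T then f (inv s \<otimes> x) else 0))"
            by auto
          then show ?thesis using x Meas_cmult[OF \<mu> c, of "u x"] by (simp add: h_def)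
        qed (simp add: h_def)
      qed
      have "conv G T \<mu> (phi f) u = I (\<lambda>x. u x * h x)"
        using u step1 step2 step3 by (simp add: conv_def)
      then show ?thesis using u hC by (simp add: I_apply Cfun_mult)
    qed
  qed
  then show ?thesis unfolding L1_def using Cfun_integrable[OF hC] by blast
qed

lemma psi_ZM:
  assumes \<mu>: "\<mu> \<in> ZM G T" and b: "bump f V"
  shows "conv G T \<mu> (phi f) \<in> ZM G T"
proof -
  have \<mu>M: "\<mu> \<in> Meas T" and ci: "cinv \<mu>" using \<mu> ZM_iff by auto
  have f: "f \<in> Cfun T" using bumpD[OF b] by blast
  have \<psi>M: "conv G T \<mu> (phi f) \<in> Meas T" by (rule L1_Meas[OF psi_L1[OF \<mu>M f]])
  have "cinv (conv G T \<mu> (phi f))" unfolding cinv_def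
  proof (intro ballI)
    fix y u assume y: "y \<in> carrier G" and u: "u \<in> Cfun T"
    define Gu where "Gu = (\<lambda>s. if s \<in> topspace T then phi f (\<lambda>t. if t \<in> topspace T then u (s \<otimes> t) else 0) else 0)"
    have GuC: "Gu \<in> Cfun T" unfolding Gu_def by (rule inner_Cfun[OF u phi_Meas[OF f]])
    define v where "v = (\<lambda>s. if s \<in> topspace T then u (y \<otimes> s \<otimes> inv y) else 0)"
    have vC: "v \<in> Cfun T" unfolding v_def using u y by (intro Cfun_compT continuous_intros) auto
    have Gv: "(\<lambda>s. if s \<in> topspace T then phi f (\<lambda>t. if t \<in> topspace T then v (s \<otimes> t) else 0) else 0)
        = (\<lambda>s. if s \<in> topspace T then Gu (y \<otimes> s \<otimes> inv y) else 0)"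
    proof
      fix s show "(if s \<in> topspace T then phi f (\<lambda>t. if t \<in> topspace T then v (s \<otimes> t) else 0) else 0)
        = (if s \<in> topspace T then Gu (y \<otimes> s \<otimes> inv y) else 0)"
      proof (cases "s \<in> topspace T")
        case s: True
        have s': "y \<otimes> s \<otimes> inv y \<in> topspace T" using s y by (simp add: top)
        define w where "w = (\<lambda>t. if t \<in> topspace T then u (y \<otimes> s \<otimes> inv y \<otimes> t) * f t else 0)"
        have wC: "w \<in> Cfun T" unfolding w_def
          using u f s y by (intro Cfun_ext0 continuous_map_cmult Cfun_cont Cfun_cont_comp continuous_intros) (auto simp: top)
        have "(\<lambda>t. if t \<in> topspace T then v (s \<otimes> t) else 0) = (\<lambda>t. if t \<in> topspace T then u (y \<otimes> (s \<otimes> t) \<otimes> inv y) else 0)"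
          using s y by (intro ext) (auto simp: v_def top)
        then have "phi f (\<lambda>t. if t \<in> topspace T then v (s \<otimes> t) else 0) = I (\<lambda>t. if t \<in> topspace T then u (y \<otimes> (s \<otimes> t) \<otimes> inv y) * f t else 0)"
        proof -
          have c: "(\<lambda>t. if t \<in> topspace T then u (y \<otimes> (s \<otimes> t) \<otimes> inv y) else 0) \<in> Cfun T"
            using u s y by (intro Cfun_compT continuous_intros) (auto simp: top)
          assume "(\<lambda>t. if t \<in> topspace T then v (s \<otimes> t) else 0) = (\<lambda>t. if t \<in> topspace T then u (y \<otimes> (s \<otimes> t) \<otimes> inv y) else 0)"
          then show ?thesis using phi_ext[OF f c] by simp
        qed
        also have "(\<lambda>t. if t \<in> topspace T then u (y \<otimes> (s \<otimes> t) \<otimes> inv y) * f t else 0) = (\<lambda>t. if t \<in> topspace T then w (y \<otimes> t \<otimes> inv y) else 0)"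
          using s y bumpD(6)[OF b y] by (intro ext) (auto simp: w_def top m_assoc)
        also have "I \<dots> = I w" by (rule CI[OF y wC])
        also have "I w = Gu (y \<otimes> s \<otimes> inv y)"
          unfolding Gu_def w_def using Gfun_eq[OF f u s'] s' by simp
        finally show ?thesis using s by simp
      qed simp
    qed
    have "conv G T \<mu> (phi f) v = \<mu> (\<lambda>s. if s \<in> topspace T then Gu (y \<otimes> s \<otimes> inv y) else 0)"
      using vC Gv by (simp add: conv_def)
    also have "\<dots> = \<mu> Gu" using ci GuC y by (simp add: cinv_def)
    also have "\<dots> = conv G T \<mu> (phi f) u" using u by (simp add: conv_def Gu_def)
    finally show "conv G T \<mu> (phi f) (\<lambda>s. if s \<in> topspace T then u (y \<otimes> s \<otimes> inv y) else 0) = conv G T \<mu> (phi f) u"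
      by (simp add: v_def)
  qed
  then show ?thesis using \<psi>M ZM_iff by blast
qed

lemma psi_ZL1:
  assumes \<mu>: "\<mu> \<in> ZM G T" and b: "bump f V"
  shows "conv G T \<mu> (phi f) \<in> ZL1 G T m"
proof -
  have \<mu>M: "\<mu> \<in> Meas T" using \<mu> by (simp add: ZM_def)
  have f: "f \<in> Cfun T" using bumpD[OF b] by blast
  have "conv G T \<mu> (phi f) \<in> ZM G T" by (rule psi_ZM[OF \<mu> b])
  then show ?thesis using psi_L1[OF \<mu>M f] L1_Meas unfolding ZL1_def ZM_def by blast
qed

lemma psi_close:
  assumes \<mu>: "\<mu> \<in> Meas T" and b: "bump f V" and B: "B \<ge> 0"
    and Bap: "\<And>u v e. u \<in> Cfun T \<Longrightarrow> v \<in> Cfun T \<Longrightarrow> (\<And>x. x \<in> topspace T \<Longrightarrow> cmod (u x - v x) \<le> e)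
      \<Longrightarrow> cmod (\<mu> u - \<mu> v) \<le> B * e"
    and u: "u \<in> Cfun T" and close: "\<And>s t. s \<in> topspace T \<Longrightarrow> t \<in> V \<Longrightarrow> cmod (u (s \<otimes> t) - u s) \<le> e"
  shows "cmod (conv G T \<mu> (phi f) u - \<mu> u) \<le> B * e"
proof -
  have f: "f \<in> Cfun T" using bumpD[OF b] by blast
  define Gu where "Gu = (\<lambda>s. if s \<in> topspace T then phi f (\<lambda>t. if t \<in> topspace T then u (s \<otimes> t) else 0) else 0)"
  have GuC: "Gu \<in> Cfun T" unfolding Gu_def by (rule inner_Cfun[OF u phi_Meas[OF f]])
  have "cmod (\<mu> Gu - \<mu> u) \<le> B * e"
  proof (rule Bap[OF GuC u])
    fix s assume s: "s \<in> topspace T"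
    define g where "g = (\<lambda>t. if t \<in> topspace T then (u (s \<otimes> t) - u s) * f t else 0)"
    have gC: "g \<in> Cfun T" unfolding g_def
      using u f s by (intro Cfun_ext0 continuous_map_cmult continuous_map_diff Cfun_cont Cfun_cont_comp continuous_intros) (auto simp: top)
    have a1: "(\<lambda>t. if t \<in> topspace T then u (s \<otimes> t) * f t else 0) \<in> Cfun T"
      using u f s by (intro Cfun_ext0 continuous_map_cmult Cfun_cont Cfun_cont_comp continuous_intros) (auto simp: top)
    have "u s = u s * I f" using bumpD(5)[OF b] by simp
    also have "\<dots> = I (\<lambda>t. u s * f t)" using Meas_cmult[OF I_Meas f] by simp
    finally have us: "u s = I (\<lambda>t. u s * f t)" .
    have "Gu s - u s = I (\<lambda>t. if t \<in> topspace T then u (s \<otimes> t) * f t else 0) - I (\<lambda>t. u s * f t)"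
      using Gfun_eq[OF f u s] s us by (simp add: Gu_def)
    also have "\<dots> = I g"
    proof -
      have "g = (\<lambda>t. (if t \<in> topspace T then u (s \<otimes> t) * f t else 0) - u s * f t)"
        using f by (auto simp: g_def Cfun_out algebra_simps)
      then show ?thesis using Meas_diff[OF I_Meas a1 Cfun_cmult[OF f]] by simp
    qed
    also have "I g = (\<integral>t. g t \<partial>m)" by (rule I_apply[OF gC])
    finally have eq: "Gu s - u s = (\<integral>t. g t \<partial>m)" .
    have "cmod (\<integral>t. g t \<partial>m) \<le> (\<integral>t. cmod (g t) \<partial>m)" by (rule integral_norm_bound)
    also have "\<dots> \<le> (\<integral>t. e * Re (f t) \<partial>m)"
    proof (rule Bochner_Integration.integral_mono)
      show "integrable m (\<lambda>t. cmod (g t))" using Cfun_integrable[OF gC] by simp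
      show "integrable m (\<lambda>t. e * Re (f t))" using Cfun_integrable[OF f] by simp
      fix t assume "t \<in> space m"
      then have t: "t \<in> topspace T" by (simp add: space_m)
      have cf: "cmod (f t) = Re (f t)" using bumpD(2,3)[OF b t] by (simp add: cmod_eq_Re)
      show "cmod (g t) \<le> e * Re (f t)"
      proof (cases "f t = 0")
        case True then show ?thesis by (simp add: g_def)
      next
        case False
        then have "t \<in> V" using bumpD(4)[OF b t] by blast
        then have "cmod (u (s \<otimes> t) - u s) \<le> e" using close s by blast
        then show ?thesis using t cf by (simp add: g_def norm_mult mult_right_mono bumpD(3)[OF b t])
      qed
    qed
    also have "\<dots> = e * Re (I f)" using I_Re[OF f] by simp
    also have "\<dots> = e" using bumpD(5)[OF b] by simp
    finally show "cmod (Gu s - u s) \<le> e" using eq by simp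
  qed
  moreover have "conv G T \<mu> (phi f) u = \<mu> Gu" using u by (simp add: conv_def Gu_def)
  ultimately show ?thesis by simp
qed

end

context hgrp
begin

lemma approx_finite:
  assumes \<mu>: "\<mu> \<in> ZM G T" and J: "finite J" and e: "\<epsilon> > 0"
  shows "\<exists>\<psi>\<in>ZL1 G T m. \<forall>u\<in>J. cmod (\<psi> u - \<mu> u) < \<epsilon>"
proof -
  have \<mu>M: "\<mu> \<in> Meas T" using \<mu> by (simp add: ZM_def)
  obtain B where B: "B \<ge> 0" "\<And>u v e. u \<in> Cfun T \<Longrightarrow> v \<in> Cfun T \<Longrightarrow> (\<And>x. x \<in> topspace T \<Longrightarrow> cmod (u x - v x) \<le> e)
      \<Longrightarrow> cmod (\<mu> u - \<mu> v) \<le> B * e"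
    using Meas_approx[OF \<mu>M cpt ne] by blast
  define \<delta> where "\<delta> = \<epsilon> / (B + 1)"
  have \<delta>: "\<delta> > 0" "B * \<delta> < \<epsilon>" using B(1) e by (auto simp: \<delta>_def field_simps)
  have "\<forall>u\<in>J \<inter> Cfun T. \<exists>W. openin T W \<and> \<one> \<in> W \<and> (\<forall>t\<in>W. \<forall>s\<in>topspace T. cmod (u (s \<otimes> t) - u s) \<le> \<delta>)"
  proof
    fix u assume "u \<in> J \<inter> Cfun T"
    then have u: "u \<in> Cfun T" by blast
    have F: "continuous_map T2 euclidean (\<lambda>p. u (snd p \<otimes> fst p))"
      using u by (intro Cfun_cont_comp continuous_intros)
    obtain W where W: "openin T W" "\<one> \<in> W" "\<And>t s. t \<in> W \<Longrightarrow> s \<in> topspace T \<Longrightarrow> norm (u (s \<otimes> t) - u (s \<otimes> \<one>)) < \<delta>"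
      using tube_close[OF cpt F _ \<delta>(1), of \<one>] by (auto simp: top)
    show "\<exists>W. openin T W \<and> \<one> \<in> W \<and> (\<forall>t\<in>W. \<forall>s\<in>topspace T. cmod (u (s \<otimes> t) - u s) \<le> \<delta>)"
      using W by (intro exI[of _ W]) (auto simp: top intro: less_imp_le)
  qed
  then obtain W where W: "\<And>u. u \<in> J \<inter> Cfun T \<Longrightarrow> openin T (W u) \<and> \<one> \<in> W u \<and> (\<forall>t\<in>W u. \<forall>s\<in>topspace T. cmod (u (s \<otimes> t) - u s) \<le> \<delta>)"
    by metis
  define V where "V = (\<Inter>u\<in>J \<inter> Cfun T. W u) \<inter> topspace T"
  have "openin T V" unfolding V_def using W J by (intro openin_INT) auto
  moreover have "\<one> \<in> V" unfolding V_def using W by (auto simp: top)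
  ultimately have V: "openin T V" "\<one> \<in> V" by auto
  obtain f where b: "bump f V" using bump_exists[OF V] by blast
  show ?thesis
  proof (intro bexI[of _ "conv G T \<mu> (phi f)"] ballI)
    show "conv G T \<mu> (phi f) \<in> ZL1 G T m" by (rule psi_ZL1[OF \<mu> b])
    fix u assume uJ: "u \<in> J"
    show "cmod (conv G T \<mu> (phi f) u - \<mu> u) < \<epsilon>"
    proof (cases "u \<in> Cfun T")
      case u: True
      have "cmod (conv G T \<mu> (phi f) u - \<mu> u) \<le> B * \<delta>"
      proof (rule psi_close[OF \<mu>M b B u])
        fix s t assume "s \<in> topspace T" "t \<in> V"
        then show "cmod (u (s \<otimes> t) - u s) \<le> \<delta>" using W[of u] uJ u by (auto simp: V_def)
      qed
      then show ?thesis using \<delta> by simp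
    next
      case False then show ?thesis using e Meas_out[OF \<mu>M False] by (simp add: conv_def)
    qed
  qed
qed

lemma ZM_closure: "ZM G T \<subseteq> closure (ZL1 G T m)"
proof
  fix \<mu> assume \<mu>: "\<mu> \<in> ZM G T"
  show "\<mu> \<in> closure (ZL1 G T m)"
    unfolding closure_iff_nhds_not_empty
  proof (intro allI impI)
    fix A S assume SA: "S \<subseteq> A" and oS: "open S" and \<mu>S: "\<mu> \<in> S"
    have "openin (product_topology (\<lambda>i. euclidean) UNIV) S" using oS by (simp add: open_fun_def)
    then obtain U where U: "finite {i \<in> UNIV. U i \<noteq> topspace euclidean}" "\<forall>i\<in>UNIV. openin euclidean (U i)"
        "\<mu> \<in> Pi\<^sub>E UNIV U" "Pi\<^sub>E UNIV U \<subseteq> S"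
      using \<mu>S unfolding openin_product_topology_alt by blast
    define J where "J = {i. U i \<noteq> UNIV}"
    have J: "finite J" using U(1) by (simp add: J_def)
    have "\<forall>i\<in>J. \<exists>e>0. ball (\<mu> i) e \<subseteq> U i"
    proof
      fix i assume "i \<in> J"
      have "open (U i)" using U(2) by simp
      moreover have "\<mu> i \<in> U i" using U(3) by (simp add: PiE_iff)
      ultimately show "\<exists>e>0. ball (\<mu> i) e \<subseteq> U i" by (simp add: open_contains_ball)
    qed
    then obtain e where e: "\<And>i. i \<in> J \<Longrightarrow> e i > 0 \<and> ball (\<mu> i) (e i) \<subseteq> U i" by metis
    define \<epsilon> where "\<epsilon> = Min (insert 1 (e ` J))"
    have \<epsilon>: "\<epsilon> > 0" unfolding \<epsilon>_def using J e by (subst Min_gr_iff) auto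
    have \<epsilon>le: "\<epsilon> \<le> e i" if "i \<in> J" for i unfolding \<epsilon>_def using J that by (intro Min_le) auto
    obtain \<psi> where \<psi>: "\<psi> \<in> ZL1 G T m" "\<And>u. u \<in> J \<Longrightarrow> cmod (\<psi> u - \<mu> u) < \<epsilon>"
      using approx_finite[OF \<mu> J \<epsilon>] by blast
    have "\<psi> \<in> Pi\<^sub>E UNIV U"
    proof (simp add: PiE_iff, intro allI)
      fix i show "\<psi> i \<in> U i"
      proof (cases "i \<in> J")
        case True
        have "dist (\<mu> i) (\<psi> i) < e i" using \<psi>(2)[OF True] \<epsilon>le[OF True] by (simp add: dist_norm norm_minus_commute)
        then show ?thesis using e[OF True] by auto
      next
        case False then show ?thesis by (simp add: J_def)
      qed
    qed
    then have "\<psi> \<in> A" using U(4) SA by blast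
    then show "ZL1 G T m \<inter> A \<noteq> {}" using \<psi>(1) by blast
  qed
qed

lemma ZM_closed: "closedin (subtopology euclidean (Meas T)) (ZM G T)"
proof -
  define C :: "(('a \<Rightarrow> complex) \<Rightarrow> complex) set" where "C = (\<Inter>p\<in>carrier G \<times> Cfun T. {\<phi>. \<phi> (\<lambda>s. if s \<in> topspace T then snd p (fst p \<otimes> s \<otimes> inv (fst p)) else 0) = \<phi> (snd p)})"
  have "closed C" unfolding C_def
    by (intro closed_INT ballI closed_Collect_eq continuous_on_product_coordinates)
  moreover have "ZM G T = Meas T \<inter> C"
    by (auto simp: ZM_iff cinv_def C_def cong: if_cong)
  ultimately show ?thesis by (simp add: closedin_closed_Int)
qed

end

theorem proposition1p4:
  fixes G :: "('a, 'b) monoid_scheme" and T :: "'a topology" and m :: "'a measure"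
  assumes "compact_group G T"
    and "haar_measure G T m"
  shows "(closedin (subtopology euclidean (Meas T)) (ZM G T)) \<and>
         ZM G T \<subseteq> closure (ZL1 G T m) \<and>
         mtilde G T ` ZM (G \<times>\<times> G) (prod_topology T T) = ZM G T \<and>
         (\<forall>\<mu>\<in>ZM (G \<times>\<times> G) (prod_topology T T). \<forall>\<nu>\<in>ZM (G \<times>\<times> G) (prod_topology T T).
           mtilde G T (conv (G \<times>\<times> G) (prod_topology T T) \<mu> \<nu>)
             = conv G T (mtilde G T \<mu>) (mtilde G T \<nu>)) \<and>
         (\<forall>\<mu>\<in>ZM (G \<times>\<times> G) (prod_topology T T). \<forall>\<nu>\<in>ZM (G \<times>\<times> G) (prod_topology T T). \<forall>a b.
           mtilde G T (\<lambda>u. a * \<mu> u + b * \<nu> u)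
             = (\<lambda>u. a * mtilde G T \<mu> u + b * mtilde G T \<nu> u))"
proof -
  interpret hgrp G T m
    using assms by (simp add: hgrp_def hgrp_axioms_def cgrp_def)
  show ?thesis
  proof (intro conjI ballI allI)
    show "closedin (subtopology euclidean (Meas T)) (ZM G T)" by (rule ZM_closed)
    show "ZM G T \<subseteq> closure (ZL1 G T m)" by (rule ZM_closure)
    show "mtilde G T ` ZM (G \<times>\<times> G) (prod_topology T T) = ZM G T"
      using mtilde_cinv mtilde_onto by blast
  qed (auto simp: mtilde_hom mtilde_lin)
qed

end
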